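(* Consider a stochastic combinatorial semi-bandit in which the outcome distribution satisfies: for all $i\in[n]$ and $\lambda\in\mathbb R$, $\mathbb E[e^{\lambda(X_i-\mu^*_i)}]\le e^{\lambda^2/2}$. Let the actions $A_1,A_2,\dots$ be chosen by any policy (each $A_u$ depending only on past observations), let $t\ge 2$ and $i,j\in[n]$ with $N_{ij,t-1}\ge1$. Then with probability at least $1-10t^{-2}$, $$\big|\Sigma^*_{ij}-\bar\Sigma_{ij,t-1}\big|\le g_{ij}(t)\triangleq 16\left(\frac{3\log t}{N_{ij,t-1}}\vee\sqrt{\frac{3\log t}{N_{ij,t-1}}}\right)+\sqrt{\frac{48\log^2 t}{N_{ij,t-1}N_{i,t-1}}}+\sqrt{\frac{36\log^2 t}{N_{ij,t-1}N_{j,t-1}}}.$$ In particular, defining $\Sigma_{ij,t}\triangleq\bar\Sigma_{ij,t-1}+g_{ij}(t)$, it holds that $0\le\Sigma_{ij,t}-\Sigma^*_{ij}\le 2g_{ij}(t)$ with probability at least $1-10t^{-2}$.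
   Context: Stochastic combinatorial semi-bandit: arms $[n]$, action space $\mathcal A$ of nonempty subsets of $[n]$; i.i.d. outcome vectors $\mathbf X_u\in\mathbb R^n$ with mean $\boldsymbol\mu^*$ and covariance $\boldsymbol\Sigma^*=\mathbb E[(\mathbf X-\boldsymbol\mu^* )(\mathbf X-\boldsymbol\mu^* )^{\mathsf T}]$; at round $u$ the agent plays $A_u\in\mathcal A$ and observes $X_{i,u}$ for $i\in A_u$. Counters: $N_{i,t-1}=\sum_{u\in[t-1]}\mathbb 1\{i\in A_u\}$, $N_{ij,t-1}=\sum_{u\in[t-1]}\mathbb 1\{i,j\in A_u\}$. Empirical mean $\bar\mu_{i,t-1}=\sum_{u\in[t-1]}\mathbb 1\{i\in A_u\}X_{i,u}/N_{i,t-1}$ and empirical covariance $\bar\Sigma_{ij,t-1}=\sum_{u\in[t-1]}\mathbb 1\{i,j\in A_u\}(X_{i,u}-\bar\mu_{i,t-1})(X_{j,u}-\bar\mu_{j,t-1})/N_{ij,t-1}$. $a\vee b=\max(a,b)$. (The paper normalizes the sub-Gaussian constant $\kappa$ to $1$.) *)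

theory Defs
  imports "HOL-Probability.Probability"
begin

text \<open>Rounds are indexed by positive naturals; the history before round t consists of rounds
  1, ..., t-1. Arms are 0, ..., n-1. Outcome vectors are X u w :: nat => real (only the
  coordinates below n matter).\<close>

definition obs :: "(nat \<Rightarrow> 'a \<Rightarrow> nat set) \<Rightarrow> (nat \<Rightarrow> 'a \<Rightarrow> nat \<Rightarrow> real) \<Rightarrow> nat \<Rightarrow> nat \<Rightarrow> 'a \<Rightarrow> real" where
  "obs A X v i w = (if i \<in> A v w then X v w i else 0)"

definition hist_events ::
  "'a measure \<Rightarrow> 'r measure \<Rightarrow> ('a \<Rightarrow> 'r) \<Rightarrow> (nat \<Rightarrow> 'a \<Rightarrow> nat set)
     \<Rightarrow> (nat \<Rightarrow> 'a \<Rightarrow> nat \<Rightarrow> real) \<Rightarrow> nat \<Rightarrow> 'a set set" where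
  "hist_events M MR R A X u = sigma_sets (space M)
     ({R -` B \<inter> space M | B. B \<in> sets MR}
      \<union> {A v -` {S} \<inter> space M | v S. v < u}
      \<union> {(\<lambda>w. obs A X v i w) -` B \<inter> space M | v i B. v < u \<and> B \<in> sets borel})"

definition Ncnt :: "(nat \<Rightarrow> 'a \<Rightarrow> nat set) \<Rightarrow> nat \<Rightarrow> nat \<Rightarrow> 'a \<Rightarrow> nat" where
  "Ncnt A t i w = card {u \<in> {1..<t}. i \<in> A u w}"

definition Npair :: "(nat \<Rightarrow> 'a \<Rightarrow> nat set) \<Rightarrow> nat \<Rightarrow> nat \<Rightarrow> nat \<Rightarrow> 'a \<Rightarrow> nat" where
  "Npair A t i j w = card {u \<in> {1..<t}. i \<in> A u w \<and> j \<in> A u w}"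

definition emp_mean :: "(nat \<Rightarrow> 'a \<Rightarrow> nat set) \<Rightarrow> (nat \<Rightarrow> 'a \<Rightarrow> nat \<Rightarrow> real) \<Rightarrow> nat \<Rightarrow> nat \<Rightarrow> 'a \<Rightarrow> real" where
  "emp_mean A X t i w =
     (\<Sum>u\<in>{1..<t}. (if i \<in> A u w then X u w i else 0)) / real (Ncnt A t i w)"

definition emp_cov :: "(nat \<Rightarrow> 'a \<Rightarrow> nat set) \<Rightarrow> (nat \<Rightarrow> 'a \<Rightarrow> nat \<Rightarrow> real) \<Rightarrow> nat \<Rightarrow> nat \<Rightarrow> nat \<Rightarrow> 'a \<Rightarrow> real" where
  "emp_cov A X t i j w =
     (\<Sum>u\<in>{1..<t}. (if i \<in> A u w \<and> j \<in> A u w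
        then (X u w i - emp_mean A X t i w) * (X u w j - emp_mean A X t j w) else 0))
     / real (Npair A t i j w)"

definition gwidth :: "(nat \<Rightarrow> 'a \<Rightarrow> nat set) \<Rightarrow> nat \<Rightarrow> nat \<Rightarrow> nat \<Rightarrow> 'a \<Rightarrow> real" where
  "gwidth A t i j w =
     (let Nij = real (Npair A t i j w); Ni = real (Ncnt A t i w); Nj = real (Ncnt A t j w);
          L = ln (real t)
      in 16 * max (3 * L / Nij) (sqrt (3 * L / Nij))
         + sqrt (48 * L^2 / (Nij * Ni)) + sqrt (36 * L^2 / (Nij * Nj)))"

end

theory Submission
  imports Defs
begin

lemma ennreal_term_le_suminf: "(f i :: ennreal) \<le> (\<Sum>k. f k)"
proof (rule ccontr)
  assume "\<not> f i \<le> (\<Sum>k. f k)"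
  hence "(\<Sum>k. f k) < f i" by simp
  hence "f i < f i" by (rule ennreal_suminf_lessD)
  thus False by simp
qed

lemma lattice_pw:
  fixes c h x :: real assumes c: "c>0" and h: "h>0"
  shows "ennreal (exp (c*x^2)) \<le> ennreal (exp (h^2/(16*c))) *
     (1 + (\<Sum>k. ennreal (exp (-((real (Suc k))^2*h^2/(4*c))) *
        (exp (real (Suc k)*h*x) + exp (-(real (Suc k)*h*x))))))"
proof -
  define r where "r = 2*c*\<bar>x\<bar>/h"
  have r0: "r \<ge> 0" using c h by (simp add: r_def)
  define k0 where "k0 = nat \<lfloor>r + 1/2\<rfloor>"
  have k0r: "\<bar>real k0 - r\<bar> \<le> 1/2"
  proof -
    have f0: "0 \<le> \<lfloor>r+1/2\<rfloor>" using r0 by simp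
    have "real k0 = of_int \<lfloor>r+1/2\<rfloor>" using f0 by (simp add: k0_def)
    moreover have "of_int \<lfloor>r+1/2\<rfloor> \<le> r + 1/2" by (rule of_int_floor_le)
    moreover have "r + 1/2 < of_int \<lfloor>r+1/2\<rfloor> + 1" by (rule real_of_int_floor_add_one_gt)
    ultimately show ?thesis by linarith
  qed
  have key: "c*x^2 - h^2/(16*c) \<le> real k0 * h * \<bar>x\<bar> - (real k0)^2*h^2/(4*c)"
  proof -
    have "(real k0 * h - 2*c*\<bar>x\<bar>)^2 \<le> h^2/4"
    proof -
      have "real k0 * h - 2*c*\<bar>x\<bar> = h * (real k0 - r)" using h by (simp add: r_def field_simps)
      hence "(real k0 * h - 2*c*\<bar>x\<bar>)^2 = h^2 * (real k0 - r)^2" by (simp add: power_mult_distrib)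
      also have "\<dots> \<le> h^2 * (1/2)^2"
      proof (intro mult_left_mono)
        have "\<bar>real k0 - r\<bar>^2 \<le> (1/2)^2" using k0r by (intro power_mono) auto
        thus "(real k0 - r)^2 \<le> (1/2)^2" by simp
      qed simp
      also have "h^2 * (1/2)^2 = h^2/4" by (simp add: power2_eq_square)
      finally show ?thesis .
    qed
    hence "(real k0 * h - 2*c*\<bar>x\<bar>)^2 / (4*c) \<le> h^2/(16*c)"
      using c by (simp add: field_simps)
    moreover have "(real k0 * h - 2*c*\<bar>x\<bar>)^2 / (4*c) = (real k0)^2*h^2/(4*c) - real k0 * h * \<bar>x\<bar> + c*x^2"
      using c by (simp add: field_simps power2_eq_square)
    ultimately show ?thesis by linarith
  qed
  define S where "S = (\<Sum>k. ennreal (exp (-((real (Suc k))^2*h^2/(4*c))) *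
        (exp (real (Suc k)*h*x) + exp (-(real (Suc k)*h*x)))))"
  show ?thesis
  proof (cases "k0 = 0")
    case True
    with key have "c*x^2 \<le> h^2/(16*c)" by simp
    hence "ennreal (exp (c*x^2)) \<le> ennreal (exp (h^2/(16*c))) * 1"
      by (simp add: ennreal_leI)
    also have "\<dots> \<le> ennreal (exp (h^2/(16*c))) * (1 + S)"
      by (intro mult_left_mono) auto
    finally show ?thesis by (simp add: S_def)
  next
    case False
    then obtain k where k: "k0 = Suc k" using not0_implies_Suc by blast
    have "exp (c*x^2) \<le> exp (h^2/(16*c)) * exp (real k0 * h * \<bar>x\<bar> - (real k0)^2*h^2/(4*c))"
      using key by (simp add: exp_add[symmetric])
    also have "\<dots> = exp (h^2/(16*c)) * (exp (-((real k0)^2*h^2/(4*c))) * exp (real k0 * h * \<bar>x\<bar>))"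
      by (simp add: exp_add[symmetric] exp_diff)
    also have "\<dots> \<le> exp (h^2/(16*c)) * (exp (-((real k0)^2*h^2/(4*c))) * (exp (real k0*h*x) + exp (-(real k0*h*x))))"
      by (intro mult_left_mono) (auto simp: abs_if)
    finally have 1: "exp (c*x^2) \<le> exp (h^2/(16*c)) * (exp (-((real k0)^2*h^2/(4*c))) * (exp (real k0*h*x) + exp (-(real k0*h*x))))" .
    have "ennreal (exp (-((real k0)^2*h^2/(4*c))) * (exp (real k0*h*x) + exp (-(real k0*h*x)))) \<le> S"
      unfolding S_def k by (rule ennreal_term_le_suminf)
    hence "ennreal (exp (c*x^2)) \<le> ennreal (exp (h^2/(16*c))) * S"
    proof -
      have "ennreal (exp (c*x^2)) \<le> ennreal (exp (h^2/(16*c)) * (exp (-((real k0)^2*h^2/(4*c))) * (exp (real k0*h*x) + exp (-(real k0*h*x)))))"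
        using 1 by (rule ennreal_leI)
      also have "\<dots> = ennreal (exp (h^2/(16*c))) * ennreal (exp (-((real k0)^2*h^2/(4*c))) * (exp (real k0*h*x) + exp (-(real k0*h*x))))"
        by (rule ennreal_mult) auto
      also have "\<dots> \<le> ennreal (exp (h^2/(16*c))) * S"
        using \<open>ennreal _ \<le> S\<close> by (rule mult_left_mono) simp
      finally show ?thesis .
    qed
    also have "\<dots> \<le> ennreal (exp (h^2/(16*c))) * (1 + S)"
      by (intro mult_left_mono) auto
    finally show ?thesis by (simp add: S_def)
  qed
qed

lemma geom_bound: "(\<Sum>k. ennreal (2*exp(1/2)*exp(-(real (Suc k))))) = ennreal (2*exp(1/2)/(exp 1 - 1))"
proof -
  have q: "norm (exp (-1::real)) < 1" by simp
  have "(\<lambda>k. (2*exp(1/2)*exp(-1)) * (exp (-1::real))^k) sums ((2*exp(1/2)*exp(-1)) * (1/(1 - exp(-1))))"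
    by (intro sums_mult geometric_sums q)
  moreover have "(\<lambda>k. (2*exp(1/2)*exp(-1)) * (exp (-1::real))^k) = (\<lambda>k. 2*exp(1/2)*exp(-(real (Suc k))))"
    by (auto simp: exp_of_nat_mult[symmetric] exp_add[symmetric] algebra_simps simp flip: exp_of_nat_mult)
  moreover have "(2*exp(1/2)*exp(-1)) * (1/(1 - exp(-1))) = 2*exp(1/2)/(exp 1 - 1::real)"
    by (simp add: exp_minus field_simps)
  ultimately have "(\<lambda>k. 2*exp(1/2)*exp(-(real (Suc k)))) sums (2*exp(1/2)/(exp 1 - 1::real))" by simp
  thus ?thesis by (intro suminf_ennreal_eq) auto
qed

lemma sq_mgf:
  fixes M :: "'a measure" and x :: "'a \<Rightarrow> real"
  assumes M: "prob_space M" and xm: "x \<in> borel_measurable M"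
    and subg: "\<And>s. integrable M (\<lambda>w. exp (s * x w)) \<and> (\<integral>w. exp (s * x w) \<partial>M) \<le> exp (s^2/2)"
  shows "(\<integral>\<^sup>+w. ennreal (exp (11/28 * (x w)^2)) \<partial>M) \<le> ennreal (exp (7/12) * (1 + 2*exp(1/2)/(exp 1 - 1)))"
proof -
  define h where "h = sqrt (11/3::real)"
  have h0: "h > 0" and h2: "h^2 = 11/3" by (auto simp: h_def)
  define c :: real where "c = 11/28"
  have c0: "c > 0" by (simp add: c_def)
  define a where "a k = exp (-((real (Suc k))^2*h^2/(4*c)))" for k
  define f where "f k w = ennreal (a k * (exp (real (Suc k)*h*x w) + exp (-(real (Suc k)*h*x w))))" for k w
  have fm: "f k \<in> borel_measurable M" for k unfolding f_def using xm by measurable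
  have pw: "ennreal (exp (c*(x w)^2)) \<le> ennreal (exp (h^2/(16*c))) * (1 + (\<Sum>k. f k w))" for w
    unfolding f_def a_def by (rule lattice_pw[OF c0 h0])
  have "(\<integral>\<^sup>+w. ennreal (exp (11/28 * (x w)^2)) \<partial>M) \<le> (\<integral>\<^sup>+w. ennreal (exp (h^2/(16*c))) * (1 + (\<Sum>k. f k w)) \<partial>M)"
    using pw by (intro nn_integral_mono) (simp add: c_def)
  also have "\<dots> = ennreal (exp (h^2/(16*c))) * (\<integral>\<^sup>+w. (1 + (\<Sum>k. f k w)) \<partial>M)"
    using fm by (intro nn_integral_cmult) measurable
  also have "(\<integral>\<^sup>+w. (1 + (\<Sum>k. f k w)) \<partial>M) = (\<integral>\<^sup>+w. 1 \<partial>M) + (\<integral>\<^sup>+w. (\<Sum>k. f k w) \<partial>M)"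
    using fm by (intro nn_integral_add) auto
  also have "(\<integral>\<^sup>+w. 1 \<partial>M) = 1" using M by (simp add: prob_space.emeasure_space_1)
  also have "(\<integral>\<^sup>+w. (\<Sum>k. f k w) \<partial>M) = (\<Sum>k. \<integral>\<^sup>+w. f k w \<partial>M)"
    using fm by (rule nn_integral_suminf)
  also have "\<dots> \<le> (\<Sum>k. ennreal (2*exp(1/2)*exp(-(real (Suc k)))))"
  proof (intro suminf_le summableI)
    fix k
    define s where "s = real (Suc k) * h"
    have i1: "integrable M (\<lambda>w. exp (s*x w))" using subg by blast
    have i2: "integrable M (\<lambda>w. exp (-(s*x w)))" using subg[of "-s"] by simp
    have "(\<integral>\<^sup>+w. f k w \<partial>M) = ennreal (\<integral>w. a k * (exp (s*x w) + exp (-(s * x w))) \<partial>M)"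
      unfolding f_def s_def using i1 i2 unfolding s_def
      by (intro nn_integral_eq_integral) (auto simp: a_def)
    also have "(\<integral>w. a k * (exp (s*x w) + exp (-(s * x w))) \<partial>M) = a k * ((\<integral>w. exp (s*x w) \<partial>M) + (\<integral>w. exp (-(s * x w)) \<partial>M))"
      using i1 i2 by simp
    also have "\<dots> \<le> a k * (exp (s^2/2) + exp ((-s)^2/2))"
      using subg[of s] subg[of "-s"] by (intro mult_left_mono add_mono) (auto simp: a_def)
    also have "\<dots> = 2 * exp (-((real (Suc k))^2)/2)"
    proof -
      define K where "K = (real (Suc k))^2"
      have s2: "s^2 = K * (11/3)" using h2 by (simp add: s_def K_def power_mult_distrib)
      have ak: "a k = exp (-(K * (7/3)))"
      proof -
        have "K * h^2 / (4*c) = K * (7/3)" using h2 by (simp add: c_def)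
        thus ?thesis by (simp add: a_def K_def)
      qed
      have ar: "-(K*(7/3)) + K*(11/3)/2 = -K/2" by simp
      have "a k * (exp (s^2/2) + exp ((-s)^2/2)) = 2 * (exp (-(K*(7/3))) * exp (K*(11/3)/2))"
        by (simp add: ak s2)
      also have "\<dots> = 2 * exp (-K/2)" by (simp add: exp_add[symmetric] ar)
      finally show ?thesis by (simp add: K_def)
    qed
    also have "\<dots> \<le> 2*exp(1/2)*exp(-(real (Suc k)))"
    proof -
      have "-((real (Suc k))^2)/2 \<le> 1/2 + -(real (Suc k))"
      proof -
        have sq: "0 \<le> real k * real k" by simp
        have "(real (Suc k))^2 = real k * real k + 2 * real k + 1" by (simp add: power2_eq_square algebra_simps)
        thus ?thesis using sq by linarith
      qed
      thus ?thesis by (simp add: exp_add[symmetric])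
    qed
    finally show "(\<integral>\<^sup>+w. f k w \<partial>M) \<le> ennreal (2*exp(1/2)*exp(-(real (Suc k))))"
      by (simp add: ennreal_leI)
  qed
  also have "\<dots> = ennreal (2*exp(1/2)/(exp 1 - 1))" by (rule geom_bound)
  finally have "(\<integral>\<^sup>+w. ennreal (exp (11/28 * (x w)^2)) \<partial>M) \<le> ennreal (exp (h^2/(16*c))) * (1 + ennreal (2*exp(1/2)/(exp 1 - 1)))"
    by (simp add: mult_left_mono)
  also have "\<dots> = ennreal (exp (7/12) * (1 + 2*exp(1/2)/(exp 1 - 1)))"
  proof -
    have e1: "exp 1 - 1 > (0::real)" by (simp add: one_less_exp_iff)
    have "h^2/(16*c) = 7/12" using h2 by (simp add: c_def)
    hence e: "exp (h^2/(16*c)) = exp (7/12)" by simp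
    have p: "1 + ennreal (2*exp(1/2)/(exp 1 - 1)) = ennreal (1 + 2*exp(1/2)/(exp 1 - 1))"
      using e1 by (subst ennreal_plus) auto
    show ?thesis unfolding e p using e1 by (subst ennreal_mult[symmetric]) auto
  qed
  finally show ?thesis .
qed

lemma cosh_sq: "(x::real)^2 \<le> exp x + exp (-x) - 2"
proof -
  obtain t where t: "exp x = (\<Sum>m<4. x^m / fact m) + exp t / fact 4 * x^4"
    using Maclaurin_exp_le[of x 4] by blast
  obtain t' where t': "exp (-x) = (\<Sum>m<4. (-x)^m / fact m) + exp t' / fact 4 * (-x)^4"
    using Maclaurin_exp_le[of "-x" 4] by blast
  have s4: "(\<Sum>m<(4::nat). f m) = f 0 + f 1 + f 2 + (f 3::real)" for f :: "nat \<Rightarrow> real"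
    by (simp add: eval_nat_numeral)
  have "exp x + exp (-x) = 2 + x^2 + (exp t + exp t') / 24 * x^4"
    unfolding t t' s4 by (simp add: eval_nat_numeral field_simps)
  moreover have "0 \<le> (exp t + exp t') / 24 * x^4" by (simp add: add_nonneg_nonneg)
  ultimately show ?thesis by linarith
qed

lemma exp_quad_bound: "exp (z::real) \<le> 1 + z + z^2/2 * exp \<bar>z\<bar>"
proof -
  obtain t where t: "\<bar>t\<bar> \<le> \<bar>z\<bar>" "exp z = (\<Sum>m<2. z^m / fact m) + exp t / fact 2 * z^2"
    using Maclaurin_exp_le[of z 2] by blast
  have "exp z = 1 + z + exp t / 2 * z^2" using t(2) by (simp add: eval_nat_numeral)
  moreover have "exp t \<le> exp \<bar>z\<bar>" using t(1) by simp
  ultimately show ?thesis by (simp add: mult_right_mono mult.commute)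
qed

lemma sq_le_exp: "(w::real)^2 \<le> 64 / exp 2 * exp (\<bar>w\<bar>/4)"
proof -
  define u where "u = \<bar>w\<bar>/8"
  have u0: "u \<ge> 0" by (simp add: u_def)
  have "u \<le> exp (u - 1)" using exp_ge_add_one_self[of "u - 1"] by simp
  hence "u * exp 1 \<le> exp u" by (simp add: exp_diff field_simps)
  hence "(u * exp 1)^2 \<le> (exp u)^2" using u0 by (intro power_mono) auto
  moreover have "exp (2::real) = exp 1 * exp 1" by (simp add: exp_add[symmetric])
  moreover have "(exp u)^2 = exp (2*u)" by (simp add: power2_eq_square exp_add[symmetric])
  ultimately have "u^2 * exp 2 \<le> exp (2*u)"
    by (simp add: power_mult_distrib power2_eq_square mult_ac)
  hence "u^2 \<le> exp (2*u) / exp 2" by (simp add: pos_le_divide_eq)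
  moreover have "w^2 = 64 * u^2" by (simp add: u_def power_divide power2_abs)
  moreover have "exp (2*u) = exp (\<bar>w\<bar>/4)" by (simp add: u_def)
  ultimately show ?thesis by simp
qed

lemma numeric_K: "64 / exp 2 * exp (33/56) * exp (7/12) * (1 + 2*exp(1/2)/(exp 1 - 1)) \<le> (98::real)"
proof -
  have e1: "exp (1::real) > 271/100" and e2: "exp (1::real) < 272/100"
  proof -
    have E: "\<bar>exp (1::real) - 5837465777 / 2147483648\<bar> \<le> inverse (2 ^ 32)" by (rule e_approx_32)
    have i: "inverse (2^32::real) = 1/4294967296" by simp
    have "exp (1::real) - 5837465777 / 2147483648 \<le> 1/4294967296" using abs_le_D1[OF E] i by simp
    moreover have "-(exp (1::real) - 5837465777 / 2147483648) \<le> 1/4294967296" using abs_le_D2[OF E] i by simp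
    ultimately show "exp (1::real) > 271/100" "exp (1::real) < 272/100" by linarith+
  qed
  have h: "exp (1/2::real) \<le> 165/100"
  proof -
    have "(exp (1/2::real))^2 = exp 1" by (simp add: exp_double[symmetric] power2_eq_square exp_add[symmetric])
    moreover have "(165/100::real)^2 = 27225/10000" by (simp add: power2_eq_square)
    ultimately have "(exp (1/2::real))^2 \<le> (165/100)^2" using e2 by linarith
    thus ?thesis by (rule power2_le_imp_le) simp
  qed
  have A: "1 + 2*exp(1/2)/(exp 1 - 1) \<le> (1 + 2*(165/100)/(171/100)::real)"
    using h e1 by (simp add: field_simps) 
  have "64 / exp 2 * exp (33/56) * exp (7/12) = 64 / exp (139/168::real)"
    by (simp add: exp_add[symmetric] exp_diff[symmetric] field_simps exp_minus)
  also have "\<dots> \<le> 64 / (1 + 139/168 + (139/168)^2/2)"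
    using exp_lower_Taylor_quadratic[of "139/168::real"] by (intro divide_left_mono) (auto intro!: mult_pos_pos add_pos_nonneg)
  finally have B: "64 / exp 2 * exp (33/56) * exp (7/12) \<le> 64 / (1 + 139/168 + (139/168)^2/2::real)" .
  have "64 / exp 2 * exp (33/56) * exp (7/12) * (1 + 2*exp(1/2)/(exp 1 - 1))
      \<le> 64 / (1 + 139/168 + (139/168)^2/2::real) * (1 + 2*(165/100)/(171/100))"
    using A B by (intro mult_mono) (auto intro: add_nonneg_nonneg)
  also have "\<dots> \<le> 98" by (simp add: power2_eq_square)
  finally show ?thesis .
qed

lemma exp_half_le: "exp (1/2::real) \<le> 165/100"
proof -
  have E: "\<bar>exp (1::real) - 5837465777 / 2147483648\<bar> \<le> inverse (2 ^ 32)" by (rule e_approx_32)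
  have i: "inverse (2^32::real) = 1/4294967296" by simp
  have "exp (1::real) - 5837465777 / 2147483648 \<le> 1/4294967296" using abs_le_D1[OF E] i by simp
  hence e2: "exp (1::real) < 272/100" by linarith
  have "(exp (1/2::real))^2 = exp 1" by (simp add: exp_double[symmetric] power2_eq_square exp_add[symmetric])
  moreover have "(165/100::real)^2 = 27225/10000" by (simp add: power2_eq_square)
  ultimately have "(exp (1/2::real))^2 \<le> (165/100)^2" using e2 by linarith
  thus ?thesis by (rule power2_le_imp_le) simp
qed

lemma exp_mid_le: "exp ((a+b)/2) \<le> (exp a + exp (b::real))/2"
proof -
  have "0 \<le> (exp (a/2) - exp (b/2))^2" by simp
  moreover have "exp ((a+b)/2) = exp (a/2) * exp (b/2)" by (simp add: exp_add[symmetric] add_divide_distrib)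
  moreover have "exp a = (exp (a/2))^2" "exp b = (exp (b/2))^2"
    by (simp_all add: power2_eq_square exp_add[symmetric])
  ultimately show ?thesis by (simp add: power2_eq_square algebra_simps)
qed

lemma sq_integrable:
  fixes M :: "'a measure" and x :: "'a \<Rightarrow> real"
  assumes M: "prob_space M" and xm: "x \<in> borel_measurable M"
    and subg: "\<And>s. integrable M (\<lambda>w. exp (s * x w)) \<and> (\<integral>w. exp (s * x w) \<partial>M) \<le> exp (s^2/2)"
  shows "integrable M (\<lambda>w. (x w)^2) \<and> (\<integral>w. (x w)^2 \<partial>M) \<le> 13/10"
proof -
  interpret prob_space M by fact
  have i1: "integrable M (\<lambda>w. exp (x w))" using subg[of 1] by simp
  have i2: "integrable M (\<lambda>w. exp (- x w))" using subg[of "-1"] by simp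
  have ib: "integrable M (\<lambda>w. exp (x w) + exp (- x w) - 2)" using i1 i2 by auto
  have pw: "(x w)^2 \<le> exp (x w) + exp (- x w) - 2" for w by (rule cosh_sq)
  have int: "integrable M (\<lambda>w. (x w)^2)"
    by (rule Bochner_Integration.integrable_bound[OF ib]) (use xm in \<open>auto intro!: AE_I2 intro: order_trans[OF pw abs_ge_self]\<close>)
  have "(\<integral>w. (x w)^2 \<partial>M) \<le> (\<integral>w. exp (x w) + exp (- x w) - 2 \<partial>M)"
    using int ib pw by (intro integral_mono) auto
  also have "\<dots> = (\<integral>w. exp (x w) \<partial>M) + (\<integral>w. exp (- x w) \<partial>M) - 2"
    using i1 i2 by (simp add: prob_space)
  also have "\<dots> \<le> exp (1/2) + exp (1/2) - 2"
    using subg[of 1] subg[of "-1"] by simp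
  also have "\<dots> \<le> 13/10" using exp_half_le by simp
  finally show ?thesis using int by simp
qed

lemma prod_mgf:
  fixes M :: "'a measure" and x y :: "'a \<Rightarrow> real" and S l :: real
  assumes M: "prob_space M" and xm: "x \<in> borel_measurable M" and ym: "y \<in> borel_measurable M"
    and subx: "\<And>s. integrable M (\<lambda>w. exp (s * x w)) \<and> (\<integral>w. exp (s * x w) \<partial>M) \<le> exp (s^2/2)"
    and suby: "\<And>s. integrable M (\<lambda>w. exp (s * y w)) \<and> (\<integral>w. exp (s * y w) \<partial>M) \<le> exp (s^2/2)"
    and S: "S = (\<integral>w. x w * y w \<partial>M)"
    and l: "\<bar>l\<bar> \<le> 1/7"
  shows "integrable M (\<lambda>w. exp (l * (x w * y w - S))) \<and> (\<integral>w. exp (l * (x w * y w - S)) \<partial>M) \<le> exp (49 * l^2)"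
proof -
  interpret prob_space M by fact
  have sx: "integrable M (\<lambda>w. (x w)^2)" "(\<integral>w. (x w)^2 \<partial>M) \<le> 13/10"
    using sq_integrable[OF M xm subx] by auto
  have sy: "integrable M (\<lambda>w. (y w)^2)" "(\<integral>w. (y w)^2 \<partial>M) \<le> 13/10"
    using sq_integrable[OF M ym suby] by auto
  have pxy: "\<bar>x w * y w\<bar> \<le> ((x w)^2 + (y w)^2)/2" for w
  proof -
    have "0 \<le> (\<bar>x w\<bar> - \<bar>y w\<bar>)^2" by simp
    thus ?thesis by (simp add: power2_eq_square algebra_simps abs_mult)
  qed
  have iq: "integrable M (\<lambda>w. ((x w)^2 + (y w)^2)/2)" using sx sy by auto
  have ixy: "integrable M (\<lambda>w. x w * y w)"
    by (rule Bochner_Integration.integrable_bound[OF iq]) (use xm ym pxy in \<open>auto intro!: AE_I2\<close>)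
  have Sb: "\<bar>S\<bar> \<le> 3/2"
  proof -
    have "\<bar>S\<bar> \<le> (\<integral>w. \<bar>x w * y w\<bar> \<partial>M)" unfolding S by (rule integral_abs_bound)
    also have "\<dots> \<le> (\<integral>w. ((x w)^2 + (y w)^2)/2 \<partial>M)"
      using ixy iq pxy by (intro integral_mono) auto
    also have "\<dots> = ((\<integral>w. (x w)^2 \<partial>M) + (\<integral>w. (y w)^2 \<partial>M))/2"
      using sx sy by simp
    also have "\<dots> \<le> 3/2" using sx sy by simp
    finally show ?thesis .
  qed
  define c :: real where "c = 11/28"
  define F :: real where "F = exp (7/12) * (1 + 2*exp(1/2)/(exp 1 - 1))"
  have F0: "F \<ge> 0"
  proof -
    have "exp 1 - 1 > (0::real)" by (simp add: one_less_exp_iff)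
    thus ?thesis unfolding F_def by (intro mult_nonneg_nonneg add_nonneg_nonneg) auto
  qed
  have Gx: "integrable M (\<lambda>w. exp (c * (x w)^2)) \<and> (\<integral>w. exp (c * (x w)^2) \<partial>M) \<le> F"
    if xm: "x \<in> borel_measurable M"
      and subg: "\<And>s. integrable M (\<lambda>w. exp (s * x w)) \<and> (\<integral>w. exp (s * x w) \<partial>M) \<le> exp (s^2/2)"
    for x :: "'a \<Rightarrow> real"
  proof -
    have nn: "(\<integral>\<^sup>+w. ennreal (exp (c * (x w)^2)) \<partial>M) \<le> ennreal F"
      unfolding c_def F_def by (rule sq_mgf[OF M xm subg])
    have int: "integrable M (\<lambda>w. exp (c * (x w)^2))"
      by (rule integrableI_nonneg) (use xm nn in \<open>auto simp: top.not_eq_extremum order.strict_trans1\<close>)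
    have "ennreal (\<integral>w. exp (c * (x w)^2) \<partial>M) \<le> ennreal F"
      using nn nn_integral_eq_integral[OF int] by simp
    thus ?thesis using int F0 by simp
  qed
  have gx: "integrable M (\<lambda>w. exp (c * (x w)^2))" "(\<integral>w. exp (c * (x w)^2) \<partial>M) \<le> F"
    using Gx[OF xm subx] by auto
  have gy: "integrable M (\<lambda>w. exp (c * (y w)^2))" "(\<integral>w. exp (c * (y w)^2) \<partial>M) \<le> F"
    using Gx[OF ym suby] by auto
  define C :: real where "C = 64 / exp 2 * exp (33/56)"
  define B where "B w = C * ((exp (c * (x w)^2) + exp (c * (y w)^2))/2)" for w
  define W where "W w = x w * y w - S" for w
  have C0: "C \<ge> 0" by (simp add: C_def)
  have pwB: "(W w)^2 * exp (\<bar>W w\<bar>/7) \<le> B w" for w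
  proof -
    have "(W w)^2 * exp (\<bar>W w\<bar>/7) \<le> 64 / exp 2 * exp (\<bar>W w\<bar>/4) * exp (\<bar>W w\<bar>/7)"
      using sq_le_exp[of "W w"] by (intro mult_right_mono) auto
    also have "\<dots> = 64 / exp 2 * exp (c * \<bar>W w\<bar>)"
      by (simp add: c_def exp_add[symmetric])
    also have "\<dots> \<le> 64 / exp 2 * exp (c * (3/2 + ((x w)^2 + (y w)^2)/2))"
    proof -
      have "\<bar>W w\<bar> \<le> 3/2 + ((x w)^2 + (y w)^2)/2" unfolding W_def using pxy[of w] Sb abs_triangle_ineq4[of "x w * y w" S] by linarith
      hence "c * \<bar>W w\<bar> \<le> c * (3/2 + ((x w)^2 + (y w)^2)/2)" by (intro mult_left_mono) (auto simp: c_def)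
      hence "exp (c * \<bar>W w\<bar>) \<le> exp (c * (3/2 + ((x w)^2 + (y w)^2)/2))" by simp
      thus ?thesis by (intro mult_left_mono) auto
    qed
    also have "\<dots> = C * exp ((c * (x w)^2 + c * (y w)^2)/2)"
      by (simp add: C_def c_def exp_add[symmetric] field_simps)
    also have "\<dots> \<le> C * ((exp (c * (x w)^2) + exp (c * (y w)^2))/2)"
      using C0 by (intro mult_left_mono exp_mid_le) auto
    finally show ?thesis by (simp add: B_def)
  qed
  have iB: "integrable M B" unfolding B_def using gx gy by auto
  have IB: "(\<integral>w. B w \<partial>M) \<le> 98"
  proof -
    have "(\<integral>w. B w \<partial>M) = C * (((\<integral>w. exp (c * (x w)^2) \<partial>M) + (\<integral>w. exp (c * (y w)^2) \<partial>M))/2)"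
      unfolding B_def using gx gy by simp
    also have "\<dots> \<le> C * F" using gx gy C0 by (intro mult_left_mono) auto
    also have "\<dots> \<le> 98" using numeric_K by (simp add: C_def F_def mult.assoc)
    finally show ?thesis .
  qed
  have pw: "exp (l * W w) \<le> 1 + l * W w + l^2/2 * B w" for w
  proof -
    have "exp (l * W w) \<le> 1 + l * W w + (l * W w)^2/2 * exp \<bar>l * W w\<bar>" by (rule exp_quad_bound)
    also have "(l * W w)^2/2 * exp \<bar>l * W w\<bar> \<le> l^2/2 * ((W w)^2 * exp (\<bar>W w\<bar>/7))"
    proof -
      have "\<bar>l * W w\<bar> \<le> \<bar>W w\<bar>/7" proof -
        have "\<bar>l\<bar> * \<bar>W w\<bar> \<le> (1/7) * \<bar>W w\<bar>" using l by (intro mult_right_mono) auto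
        thus ?thesis by (simp add: abs_mult)
      qed
      hence "exp \<bar>l * W w\<bar> \<le> exp (\<bar>W w\<bar>/7)" by simp
      hence "l^2 * (W w)^2 * exp \<bar>l * W w\<bar> \<le> l^2 * (W w)^2 * exp (\<bar>W w\<bar>/7)"
        by (intro mult_left_mono) auto
      thus ?thesis by (simp add: power_mult_distrib mult.assoc)
    qed
    also have "l^2/2 * ((W w)^2 * exp (\<bar>W w\<bar>/7)) \<le> l^2/2 * B w"
      using pwB[of w] by (intro mult_left_mono) auto
    finally show ?thesis by simp
  qed
  have iW: "integrable M W" unfolding W_def using ixy by auto
  have IW: "(\<integral>w. W w \<partial>M) = 0" unfolding W_def using ixy by (simp add: S prob_space)
  have ibd: "integrable M (\<lambda>w. 1 + l * W w + l^2/2 * B w)" using iW iB by auto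
  have iE: "integrable M (\<lambda>w. exp (l * W w))"
  proof (rule Bochner_Integration.integrable_bound[OF ibd])
    show "(\<lambda>w. exp (l * W w)) \<in> borel_measurable M" unfolding W_def using xm ym by measurable
    show "AE w in M. norm (exp (l * W w)) \<le> norm (1 + l * W w + l^2/2 * B w)"
    proof (rule AE_I2)
      fix w
      have "0 < exp (l * W w)" by simp
      also note pw[of w]
      finally have "0 \<le> 1 + l * W w + l^2/2 * B w" by simp
      thus "norm (exp (l * W w)) \<le> norm (1 + l * W w + l^2/2 * B w)" using pw[of w] by simp
    qed
  qed
  have "(\<integral>w. exp (l * W w) \<partial>M) \<le> (\<integral>w. 1 + l * W w + l^2/2 * B w \<partial>M)"
    using iE ibd pw by (intro integral_mono) auto
  also have "\<dots> = 1 + l * (\<integral>w. W w \<partial>M) + l^2/2 * (\<integral>w. B w \<partial>M)"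
    using iW iB by (simp add: prob_space)
  also have "\<dots> \<le> 1 + 49 * l^2"
    using IW IB by (simp add: mult_left_mono[of _ 98 "l^2/2", simplified])
  also have "\<dots> \<le> exp (49 * l^2)" by (rule exp_ge_add_one_self[simplified add.commute])
  finally show ?thesis using iE by (simp add: W_def)
qed

lemma sqrt_prod_le:
  assumes "\<bar>a\<bar> \<le> sqrt p" "\<bar>b\<bar> \<le> sqrt q" "p \<ge> 0" "q \<ge> 0"
  shows "\<bar>a * b\<bar> \<le> sqrt (p * q)"
proof -
  have "\<bar>a * b\<bar> = \<bar>a\<bar> * \<bar>b\<bar>" by (simp add: abs_mult)
  also have "\<dots> \<le> sqrt p * sqrt q" using assms by (intro mult_mono) auto
  also have "\<dots> = sqrt (p * q)" by (simp add: real_sqrt_mult)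
  finally show ?thesis .
qed

lemma avg_bound:
  fixes s N L :: real
  assumes "\<bar>s\<bar> \<le> N * sqrt (6*L/N)" "N > 0"
  shows "\<bar>s / N\<bar> \<le> sqrt (6*L/N)"
proof -
  have "\<bar>s / N\<bar> = \<bar>s\<bar> / N" using assms(2) by (simp add: abs_divide)
  also have "\<dots> \<le> N * sqrt (6*L/N) / N" using assms(1) assms(2) by (intro divide_right_mono) auto
  also have "\<dots> = sqrt (6*L/N)" using assms(2) by simp
  finally show ?thesis .
qed

lemma key_alg:
  fixes S W N b X a Y :: real assumes "N \<noteq> 0"
  shows "S - (W + N * S - b * X - a * Y + N * (a * b)) / N = - (W/N) + b * (X/N) + a * (Y/N) - a * b"
  using assms by (simp add: field_simps)

lemma cov_bound:
  fixes V :: "nat set" and pi pj :: "nat \<Rightarrow> bool" and x y :: "nat \<Rightarrow> real" and S L :: real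
  defines "SSi \<equiv> {v\<in>V. pi v}" and "SSj \<equiv> {v\<in>V. pj v}" and "SSij \<equiv> {v\<in>V. pi v \<and> pj v}"
  defines "Ni \<equiv> real (card SSi)" and "Nj \<equiv> real (card SSj)" and "N \<equiv> real (card SSij)"
  defines "a \<equiv> (\<Sum>v\<in>SSi. x v) / Ni" and "b \<equiv> (\<Sum>v\<in>SSj. y v) / Nj"
  assumes V: "finite V" and N1: "card SSij \<ge> 1" and L: "L \<ge> 0"
    and hx: "\<bar>\<Sum>v\<in>SSi. x v\<bar> \<le> Ni * sqrt (6*L/Ni)"
    and hy: "\<bar>\<Sum>v\<in>SSj. y v\<bar> \<le> Nj * sqrt (6*L/Nj)"
    and hxij: "\<bar>\<Sum>v\<in>SSij. x v\<bar> \<le> N * sqrt (6*L/N)"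
    and hyij: "\<bar>\<Sum>v\<in>SSij. y v\<bar> \<le> N * sqrt (6*L/N)"
    and hw: "\<bar>\<Sum>v\<in>SSij. (x v * y v - S)\<bar> \<le> N * (14 * max (3*L/N) (sqrt (3*L/N)))"
  shows "\<bar>S - (\<Sum>v\<in>SSij. (x v - a) * (y v - b)) / N\<bar>
     \<le> 16 * max (3*L/N) (sqrt (3*L/N)) + sqrt (48*L^2/(N*Ni)) + sqrt (36*L^2/(N*Nj))"
proof -
  have fin: "finite SSi" "finite SSj" "finite SSij" unfolding SSi_def SSj_def SSij_def using V by auto
  have sub: "SSij \<subseteq> SSi" "SSij \<subseteq> SSj" unfolding SSi_def SSj_def SSij_def by auto
  have N0: "N > 0" unfolding N_def using N1 by simp
  have NNi: "N \<le> Ni" unfolding N_def Ni_def using card_mono[OF fin(1) sub(1)] by simp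
  have NNj: "N \<le> Nj" unfolding N_def Nj_def using card_mono[OF fin(2) sub(2)] by simp
  have Ni0: "Ni > 0" using N0 NNi by simp
  have Nj0: "Nj > 0" using N0 NNj by simp
  define xb where "xb = (\<Sum>v\<in>SSij. x v) / N"
  define yb where "yb = (\<Sum>v\<in>SSij. y v) / N"
  define wb where "wb = (\<Sum>v\<in>SSij. (x v * y v - S)) / N"
  have ha: "\<bar>a\<bar> \<le> sqrt (6*L/Ni)" unfolding a_def by (rule avg_bound[OF hx Ni0])
  have hb: "\<bar>b\<bar> \<le> sqrt (6*L/Nj)" unfolding b_def by (rule avg_bound[OF hy Nj0])
  have hxb: "\<bar>xb\<bar> \<le> sqrt (6*L/N)" unfolding xb_def by (rule avg_bound[OF hxij N0])
  have hyb: "\<bar>yb\<bar> \<le> sqrt (6*L/N)" unfolding yb_def by (rule avg_bound[OF hyij N0])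
  define D where "D = max (3*L/N) (sqrt (3*L/N))"
  have hwb: "\<bar>wb\<bar> \<le> 14 * D"
  proof -
    have "\<bar>wb\<bar> = \<bar>\<Sum>v\<in>SSij. (x v * y v - S)\<bar> / N" unfolding wb_def using N0 by (simp add: abs_divide)
    also have "\<dots> \<le> N * (14 * D) / N" using hw N0 unfolding D_def by (intro divide_right_mono) auto
    also have "\<dots> = 14 * D" using N0 by simp
    finally show ?thesis .
  qed
  have expand: "(\<Sum>v\<in>SSij. (x v - a) * (y v - b)) = (\<Sum>v\<in>SSij. (x v * y v - S)) + N * S - b * (\<Sum>v\<in>SSij. x v) - a * (\<Sum>v\<in>SSij. y v) + N * (a * b)"
  proof -
    have "(\<Sum>v\<in>SSij. (x v - a) * (y v - b)) = (\<Sum>v\<in>SSij. (x v * y v - S) + S - b * x v - a * y v + a * b)"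
      by (intro sum.cong refl) (simp add: algebra_simps)
    also have "\<dots> = (\<Sum>v\<in>SSij. (x v * y v - S)) + N * S - b * (\<Sum>v\<in>SSij. x v) - a * (\<Sum>v\<in>SSij. y v) + N * (a * b)"
      by (simp add: sum.distrib sum_subtractf sum_distrib_left N_def)
    finally show ?thesis .
  qed
  have key: "S - (\<Sum>v\<in>SSij. (x v - a) * (y v - b)) / N = -wb + b * xb + a * yb - a * b"
    unfolding expand wb_def xb_def yb_def using N0 by (intro key_alg) simp
  have t1: "\<bar>b * xb\<bar> \<le> sqrt (36*L^2/(N*Nj))"
  proof -
    have "\<bar>b * xb\<bar> \<le> sqrt (6*L/Nj * (6*L/N))" using hb hxb L Nj0 N0 by (intro sqrt_prod_le) auto
    also have "6*L/Nj * (6*L/N) = 36*L^2/(N*Nj)" by (simp add: power2_eq_square field_simps)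
    finally show ?thesis .
  qed
  have t2: "\<bar>a * yb\<bar> \<le> sqrt (48*L^2/(N*Ni))"
  proof -
    have "\<bar>a * yb\<bar> \<le> sqrt (6*L/Ni * (6*L/N))" using ha hyb L Ni0 N0 by (intro sqrt_prod_le) auto
    also have "6*L/Ni * (6*L/N) = 36*L^2/(N*Ni)" by (simp add: power2_eq_square field_simps)
    also have "sqrt (36*L^2/(N*Ni)) \<le> sqrt (48*L^2/(N*Ni))"
      using N0 Ni0 by (intro real_sqrt_le_mono divide_right_mono) auto
    finally show ?thesis .
  qed
  have t3: "\<bar>a * b\<bar> \<le> 2 * D"
  proof -
    have "\<bar>a * b\<bar> \<le> sqrt (6*L/Ni * (6*L/Nj))" using ha hb L Ni0 Nj0 by (intro sqrt_prod_le) auto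
    also have "\<dots> \<le> sqrt (6*L/N * (6*L/N))"
    proof (intro real_sqrt_le_mono mult_mono)
      show "6*L/Ni \<le> 6*L/N" using L N0 NNi by (intro divide_left_mono) auto
      show "6*L/Nj \<le> 6*L/N" using L N0 NNj by (intro divide_left_mono) auto
      show "0 \<le> 6*L/N" using L N0 by simp
      show "0 \<le> 6*L/Nj" using L Nj0 by simp
    qed
    also have "\<dots> = \<bar>6*L/N\<bar>" by (rule real_sqrt_abs2)
    also have "\<dots> = 6*L/N" using L N0 by simp
    also have "\<dots> \<le> 2 * D" unfolding D_def by simp
    finally show ?thesis .
  qed
  have "\<bar>S - (\<Sum>v\<in>SSij. (x v - a) * (y v - b)) / N\<bar> \<le> \<bar>wb\<bar> + \<bar>b * xb\<bar> + \<bar>a * yb\<bar> + \<bar>a * b\<bar>"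
    unfolding key by linarith
  also have "\<dots> \<le> 14 * D + sqrt (36*L^2/(N*Nj)) + sqrt (48*L^2/(N*Ni)) + 2 * D"
    using hwb t1 t2 t3 by linarith
  finally show ?thesis unfolding D_def by linarith
qed

locale bandit =
  fixes M :: "'a measure" and MR :: "'r measure" and R :: "'a \<Rightarrow> 'r"
    and n :: nat and \<A> :: "nat set set"
    and X :: "nat \<Rightarrow> 'a \<Rightarrow> nat \<Rightarrow> real"
    and A :: "nat \<Rightarrow> 'a \<Rightarrow> nat set"
  assumes M: "prob_space M"
    and actions: "\<forall>S\<in>\<A>. S \<noteq> {} \<and> S \<subseteq> {..<n}"
    and X_meas: "\<And>u k. (\<lambda>w. X u w k) \<in> borel_measurable M"
    and X_indep: "prob_space.indep_vars M (\<lambda>_. PiM {..<n} (\<lambda>_. borel))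
                    (\<lambda>u w. restrict (X u w) {..<n}) UNIV"
    and X_ident: "\<And>u. distr M (PiM {..<n} (\<lambda>_. borel)) (\<lambda>w. restrict (X u w) {..<n})
                       = distr M (PiM {..<n} (\<lambda>_. borel)) (\<lambda>w. restrict (X 0 w) {..<n})"
    and R_meas: "R \<in> measurable M MR"
    and R_indep: "prob_space.indep_set M
                    {R -` B \<inter> space M | B. B \<in> sets MR}
                    {(\<lambda>w u. restrict (X u w) {..<n}) -` C \<inter> space M | C.
                       C \<in> sets (PiM UNIV (\<lambda>_. PiM {..<n} (\<lambda>_. borel)))}"
    and A_in: "\<And>u w. w \<in> space M \<Longrightarrow> A u w \<in> \<A>"
    and A_adapted: "\<And>u S. {w \<in> space M. A u w = S} \<in> hist_events M MR R A X u"
begin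

sublocale prob_space M by (rule M)

abbreviation "PS \<equiv> PiM {..<n} (\<lambda>_. borel :: real measure)"

definition Y :: "nat \<Rightarrow> 'a \<Rightarrow> nat \<Rightarrow> real" where "Y u w = restrict (X u w) {..<n}"

lemma Y_meas[measurable]: "Y u \<in> measurable M PS"
  unfolding Y_def by (intro measurable_restrict X_meas)

definition Gen :: "nat \<Rightarrow> 'a set set" where
  "Gen u = {R -` B \<inter> space M | B. B \<in> sets MR} \<union> {Y v -` C \<inter> space M | v C. v < u \<and> C \<in> sets PS}"

definition MF :: "nat \<Rightarrow> 'a measure" where "MF u = sigma (space M) (Gen u)"

lemma Gen_Pow: "Gen u \<subseteq> Pow (space M)" unfolding Gen_def by auto

lemma sets_MF: "sets (MF u) = sigma_sets (space M) (Gen u)"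
  unfolding MF_def using Gen_Pow by (simp add: sets_measure_of)

lemma space_MF[simp]: "space (MF u) = space M"
  unfolding MF_def using Gen_Pow by (simp add: space_measure_of_conv)

lemma Gen_sets: "Gen u \<subseteq> sets M"
  unfolding Gen_def using R_meas by (auto simp: measurable_sets)

lemma sets_MF_sub: "sets (MF u) \<subseteq> sets M"
  unfolding sets_MF by (rule sets.sigma_sets_subset[OF Gen_sets])

lemma Gen_mono: "u \<le> u' \<Longrightarrow> Gen u \<subseteq> Gen u'"
  unfolding Gen_def by (intro Un_mono) (auto, force intro: less_le_trans)

lemma sets_MF_mono: "u \<le> u' \<Longrightarrow> sets (MF u) \<subseteq> sets (MF u')"
  unfolding sets_MF by (intro sigma_sets_subseteq Gen_mono)

lemma Y_meas_MF: "v < u \<Longrightarrow> Y v \<in> measurable (MF u) PS"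
proof (rule measurableI)
  fix w assume "w \<in> space (MF u)"
  thus "Y v w \<in> space PS" by (auto simp: Y_def space_PiM)
next
  fix C assume "v < u" "C \<in> sets PS"
  hence "Y v -` C \<inter> space M \<in> Gen u" unfolding Gen_def by blast
  thus "Y v -` C \<inter> space (MF u) \<in> sets (MF u)" unfolding sets_MF by auto
qed

lemma R_meas_MF: "R \<in> measurable (MF u) MR"
proof (rule measurableI)
  fix w assume "w \<in> space (MF u)"
  thus "R w \<in> space MR" using R_meas by (auto simp: measurable_space)
next
  fix B assume "B \<in> sets MR"
  hence "R -` B \<inter> space M \<in> Gen u" unfolding Gen_def by blast
  thus "R -` B \<inter> space (MF u) \<in> sets (MF u)" unfolding sets_MF by auto
qed

lemma fin_A: "finite \<A>"
proof -
  have "\<A> \<subseteq> Pow {..<n}" using actions by auto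
  thus ?thesis by (rule finite_subset) simp
qed

lemma A_meas_gen:
  assumes "\<And>S. {w \<in> space M. A v w = S} \<in> sets N" and sp: "space N = space M"
  shows "A v \<in> measurable N (count_space UNIV)"
proof (rule measurableI)
  fix Z :: "nat set set"
  have "A v -` Z \<inter> space N = (\<Union>S\<in>Z \<inter> \<A>. {w \<in> space M. A v w = S})"
    using A_in sp by auto
  also have "\<dots> \<in> sets N"
    using assms fin_A by (intro sets.finite_UN) auto
  finally show "A v -` Z \<inter> space N \<in> sets N" .
qed auto

lemma hist_sub: "hist_events M MR R A X u \<subseteq> sets (MF u)"
proof (induction u rule: less_induct)
  case (less u)
  have Av: "A v \<in> measurable (MF u) (count_space UNIV)" if "v < u" for v
  proof (rule A_meas_gen)
    fix S
    have "{w \<in> space M. A v w = S} \<in> sets (MF v)" using less that A_adapted by blast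
    thus "{w \<in> space M. A v w = S} \<in> sets (MF u)" using sets_MF_mono[of v u] that by auto
  qed simp
  show ?case unfolding hist_events_def sets_MF
  proof (rule sigma_sets_mono, safe)
    fix B assume "B \<in> sets MR"
    thus "R -` B \<inter> space M \<in> sigma_sets (space M) (Gen u)" unfolding Gen_def by blast
  next
    fix v S assume "v < u"
    have "A v -` {S} \<inter> space (MF u) \<in> sets (MF u)"
      using Av[OF \<open>v<u\<close>] by (rule measurable_sets) simp
    thus "A v -` {S} \<inter> space M \<in> sigma_sets (space M) (Gen u)" by (simp add: sets_MF)
  next
    fix v i and B :: "real set" assume vu: "v < u" and B: "B \<in> sets borel"
    have "(\<lambda>w. obs A X v i w) \<in> borel_measurable (MF u)"
    proof (cases "i < n")
      case True
      have "(\<lambda>w. if i \<in> A v w then Y v w i else 0) \<in> borel_measurable (MF u)"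
      proof (rule measurable_If)
        show "(\<lambda>w. Y v w i) \<in> borel_measurable (MF u)"
          using measurable_compose[OF Y_meas_MF[OF vu] measurable_component_singleton[of i "{..<n}"]] True
          by simp
        have "A v -` {S. i \<in> S} \<inter> space (MF u) \<in> sets (MF u)"
          using Av[OF vu] by (rule measurable_sets) simp
        moreover have "{w \<in> space (MF u). i \<in> A v w} = A v -` {S. i \<in> S} \<inter> space (MF u)" by auto
        ultimately show "{w \<in> space (MF u). i \<in> A v w} \<in> sets (MF u)" by simp
      qed simp
      moreover have "obs A X v i w = (if i \<in> A v w then Y v w i else 0)" for w
        using True by (simp add: obs_def Y_def)
      ultimately show ?thesis by simp
    next
      case False
      have "obs A X v i w = 0" if "w \<in> space (MF u)" for w
        using False A_in[of w v] that actions by (auto simp: obs_def)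
      thus ?thesis by (subst measurable_cong[where g="\<lambda>_. 0"]) auto
    qed
    hence "(\<lambda>w. obs A X v i w) -` B \<inter> space (MF u) \<in> sets (MF u)" using B by (rule measurable_sets)
    thus "(\<lambda>w. obs A X v i w) -` B \<inter> space M \<in> sigma_sets (space M) (Gen u)" by (simp add: sets_MF)
  qed
qed

lemma A_meas_MF: "v \<le> u \<Longrightarrow> A v \<in> measurable (MF u) (count_space UNIV)"
proof (rule A_meas_gen)
  fix S assume "v \<le> u"
  have "{w \<in> space M. A v w = S} \<in> sets (MF v)" using hist_sub A_adapted by blast
  thus "{w \<in> space M. A v w = S} \<in> sets (MF u)" using sets_MF_mono[OF \<open>v \<le> u\<close>] by auto
qed simp

lemma A_meas[measurable]: "A v \<in> measurable M (count_space UNIV)"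
proof (rule A_meas_gen)
  fix S
  show "{w \<in> space M. A v w = S} \<in> sets M" using hist_sub A_adapted sets_MF_sub by blast
qed simp

end

lemma opt_split: "J - {None} = Some ` {v. Some v \<in> J}"
proof
  show "J - {None} \<subseteq> Some ` {v. Some v \<in> J}"
  proof
    fix j assume j: "j \<in> J - {None}"
    then obtain v where "j = Some v" by (cases j) auto
    thus "j \<in> Some ` {v. Some v \<in> J}" using j by auto
  qed
qed auto

lemma opt_split1: "None \<notin> J \<Longrightarrow> J = Some ` {v. Some v \<in> J}"
  using opt_split[of J] by simp

lemma opt_split2: "None \<in> J \<Longrightarrow> J = insert None (Some ` {v. Some v \<in> J})"
  using opt_split[of J] by blast

context bandit begin

definition Ef :: "nat option \<Rightarrow> 'a set set" where
  "Ef i = (case i of None \<Rightarrow> {R -` B \<inter> space M | B. B \<in> sets MR}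
                   | Some v \<Rightarrow> {Y v -` C \<inter> space M | C. C \<in> sets PS})"

lemma Y_fun: "(\<lambda>u w. restrict (X u w) {..<n}) = Y" by (intro ext) (simp add: Y_def)

lemma XI: "indep_sets (\<lambda>v. Ef (Some v)) UNIV"
proof -
  have "indep_vars (\<lambda>_. PS) Y UNIV" using X_indep Y_fun by simp
  hence "indep_sets (\<lambda>i. sigma_sets (space M) {Y i -` A \<inter> space M |A. A \<in> sets PS}) UNIV"
    unfolding indep_vars_def by simp
  thus ?thesis unfolding Ef_def by (rule indep_sets_mono_sets) auto
qed

lemma RI: "indep_set (Ef None) {(\<lambda>w u. Y u w) -` C \<inter> space M | C. C \<in> sets (PiM UNIV (\<lambda>_. PS))}"
proof -
  have "(\<lambda>w u. restrict (X u w) {..<n}) = (\<lambda>w u. Y u w)" by (auto simp: Y_def)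
  thus ?thesis using R_indep by (simp add: Ef_def)
qed

lemma Ef_events: "Ef i \<subseteq> events"
  using R_meas by (auto simp: Ef_def measurable_sets split: option.splits)

lemma indep_E: "indep_sets Ef UNIV"
proof (rule indep_setsI)
  fix i show "Ef i \<subseteq> events" by (rule Ef_events)
next
  fix AA :: "nat option \<Rightarrow> 'a set" and J :: "nat option set"
  assume J: "J \<noteq> {}" "J \<subseteq> UNIV" "finite J" and AJ: "\<forall>j\<in>J. AA j \<in> Ef j"
  define J' where "J' = {v. Some v \<in> J}"
  have fJ': "finite J'" using finite_vimageI[OF J(3), of Some] by (simp add: J'_def vimage_def)
  have AJs: "AA j \<subseteq> space M" if "j \<in> J" for j using AJ that Ef_events sets.sets_into_space by blast
  have prodJ': "(\<Prod>j\<in>Some ` J'. prob (AA j)) = (\<Prod>v\<in>J'. prob (AA (Some v)))"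
    by (subst prod.reindex) auto
  have XIJ: "prob (\<Inter>v\<in>J'. AA (Some v)) = (\<Prod>v\<in>J'. prob (AA (Some v)))" if "J' \<noteq> {}"
    using AJ J'_def fJ' that by (intro indep_setsD[OF XI]) auto
  show "prob (\<Inter>j\<in>J. AA j) = (\<Prod>j\<in>J. prob (AA j))"
  proof (cases "None \<in> J")
    case False
    hence JJ: "J = Some ` J'" unfolding J'_def by (rule opt_split1)
    hence "J' \<noteq> {}" using J by auto
    thus ?thesis using XIJ JJ prodJ' by simp
  next
    case True
    hence JJ: "J = insert None (Some ` J')" unfolding J'_def by (rule opt_split2)
    define D where "D = space M \<inter> (\<Inter>v\<in>J'. AA (Some v))"
    have "\<forall>v\<in>J'. \<exists>C. C \<in> sets PS \<and> AA (Some v) = Y v -` C \<inter> space M"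
    proof
      fix v assume "v \<in> J'"
      hence "AA (Some v) \<in> Ef (Some v)" using AJ J'_def by auto
      hence "AA (Some v) \<in> {Y v -` C \<inter> space M |C. C \<in> sets PS}" by (simp add: Ef_def)
      thus "\<exists>C. C \<in> sets PS \<and> AA (Some v) = Y v -` C \<inter> space M" by blast
    qed
    then obtain CC where CC: "\<And>v. v \<in> J' \<Longrightarrow> CC v \<in> sets PS \<and> AA (Some v) = Y v -` CC v \<inter> space M"
      by metis
    define PP where "PP = PiM UNIV (\<lambda>_::nat. PS)"
    define C where "C = {f \<in> space PP. \<forall>v\<in>J'. f v \<in> CC v}"
    have Cs: "C \<in> sets PP"
    proof -
      have "C = space PP \<inter> (\<Inter>v\<in>J'. (\<lambda>f. f v) -` CC v \<inter> space PP)" unfolding C_def by auto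
      also have "\<dots> \<in> sets PP"
      proof (cases "J' = {}")
        case True thus ?thesis by simp
      next
        case False
        have "(\<Inter>v\<in>J'. (\<lambda>f. f v) -` CC v \<inter> space PP) \<in> sets PP"
          using False fJ' CC unfolding PP_def
          by (intro sets.finite_INT measurable_sets[OF measurable_component_singleton]) auto
        thus ?thesis by auto
      qed
      finally show ?thesis .
    qed
    have DC: "D = (\<lambda>w u. Y u w) -` C \<inter> space M"
    proof -
      have "(\<lambda>u. Y u w) \<in> space PP" if "w \<in> space M" for w
      proof -
        have sp: "space PP = PiE UNIV (\<lambda>_. space PS)" unfolding PP_def by (rule space_PiM)
        show ?thesis unfolding sp by (rule PiE_I) (rule measurable_space[OF Y_meas that], simp)
      qed
      thus ?thesis unfolding D_def C_def using CC by auto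
    qed
    have "AA None \<in> Ef None" using AJ True by auto
    have "D \<in> {(\<lambda>w u. Y u w) -` C \<inter> space M | C. C \<in> sets (PiM UNIV (\<lambda>_. PS))}"
      using DC Cs unfolding PP_def by blast
    hence pND: "prob (AA None \<inter> D) = prob (AA None) * prob D"
      using \<open>AA None \<in> Ef None\<close> by (intro indep_setD[OF RI]) auto
    have pD: "prob D = (\<Prod>v\<in>J'. prob (AA (Some v)))"
    proof (cases "J' = {}")
      case True thus ?thesis by (simp add: D_def prob_space)
    next
      case False
      have "D = (\<Inter>v\<in>J'. AA (Some v))" unfolding D_def using AJs False J'_def by auto
      thus ?thesis using XIJ False by simp
    qed
    have "(\<Inter>j\<in>J. AA j) = AA None \<inter> D"
      unfolding JJ D_def using AJs True by auto
    moreover have "(\<Prod>j\<in>J. prob (AA j)) = prob (AA None) * (\<Prod>v\<in>J'. prob (AA (Some v)))"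
      unfolding JJ using fJ' prodJ' by (subst prod.insert) auto
    ultimately show ?thesis using pND pD by simp
  qed
qed

lemma Int_stable_vimage: "Int_stable {f -` B \<inter> S | B. B \<in> sets N}"
  unfolding Int_stable_def
proof (safe)
  fix B1 B2 assume "B1 \<in> sets N" "B2 \<in> sets N"
  thus "\<exists>B. f -` B1 \<inter> S \<inter> (f -` B2 \<inter> S) = f -` B \<inter> S \<and> B \<in> sets N"
    by (intro exI[of _ "B1 \<inter> B2"]) auto
qed

lemma indep_FY: "indep_set (sets (MF u)) (sigma_sets (space M) (Ef (Some u)))"
proof -
  define I where "I b = (if b then insert None (Some ` {..<u}) else {Some u})" for b
  have coll: "indep_sets (\<lambda>b. sigma_sets (space M) (\<Union>i\<in>I b. Ef i)) UNIV"
  proof (rule indep_sets_collect_sigma)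
    show "indep_sets Ef (\<Union>j\<in>UNIV. I j)" by (rule indep_sets_mono_index[OF _ indep_E]) auto
    show "Int_stable (Ef i)" for i
      unfolding Ef_def by (cases i) (auto intro: Int_stable_vimage)
    show "disjoint_family_on I UNIV"
      unfolding disjoint_family_on_def I_def by auto
  qed
  have e1: "(\<Union>i\<in>I True. Ef i) = Gen u"
  proof -
    have "(\<Union>i\<in>I True. Ef i) = Ef None \<union> (\<Union>v\<in>{..<u}. Ef (Some v))" unfolding I_def by simp
    also have "Ef None = {R -` B \<inter> space M | B. B \<in> sets MR}" by (simp add: Ef_def)
    also have "(\<Union>v\<in>{..<u}. Ef (Some v)) = {Y v -` C \<inter> space M | v C. v < u \<and> C \<in> sets PS}"
      by (auto simp: Ef_def)
    finally show ?thesis unfolding Gen_def .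
  qed
  have e2: "(\<Union>i\<in>I False. Ef i) = Ef (Some u)" unfolding I_def by simp
  have "(\<lambda>b. sigma_sets (space M) (\<Union>i\<in>I b. Ef i)) = case_bool (sets (MF u)) (sigma_sets (space M) (Ef (Some u)))"
  proof
    fix b show "sigma_sets (space M) (\<Union>i\<in>I b. Ef i) = case_bool (sets (MF u)) (sigma_sets (space M) (Ef (Some u))) b"
      by (cases b) (simp_all only: e1 e2 sets_MF bool.case)
  qed
  with coll show ?thesis unfolding indep_set_def by simp
qed

lemma indep_nn:
  fixes G :: "'a \<Rightarrow> ennreal" and h :: "(nat \<Rightarrow> real) \<Rightarrow> ennreal"
  assumes G: "G \<in> borel_measurable (MF u)" and h: "h \<in> borel_measurable PS"
  shows "(\<integral>\<^sup>+w. G w * h (Y u w) \<partial>M) = (\<integral>\<^sup>+w. G w \<partial>M) * (\<integral>\<^sup>+w. h (Y u w) \<partial>M)"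
proof -
  define H where "H w = h (Y u w)" for w
  have GM: "G \<in> borel_measurable M"
    by (rule measurableI) (use measurable_space[OF G] measurable_sets[OF G] sets_MF_sub in auto)
  have HM: "H \<in> borel_measurable M" unfolding H_def using h by measurable
  have ind: "indep_vars (\<lambda>_. borel) (case_bool G H) UNIV"
    unfolding indep_vars_def
  proof
    show "\<forall>i\<in>UNIV. random_variable borel (case_bool G H i)" using GM HM by (auto split: bool.split)
    have "indep_sets (case_bool (sets (MF u)) (sigma_sets (space M) (Ef (Some u)))) UNIV"
      using indep_FY unfolding indep_set_def .
    thus "indep_sets (\<lambda>i. sigma_sets (space M) {case_bool G H i -` A \<inter> space M |A. A \<in> sets borel}) UNIV"
    proof (rule indep_sets_mono_sets)
      fix b :: bool
      show "sigma_sets (space M) {case_bool G H b -` A \<inter> space M |A. A \<in> sets borel}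
            \<subseteq> case_bool (sets (MF u)) (sigma_sets (space M) (Ef (Some u))) b"
      proof (cases b)
        case True
        have "G -` A \<inter> space M \<in> sets (MF u)" if "A \<in> sets borel" for A
          using measurable_sets[OF G that] by simp
        hence "{G -` A \<inter> space M |A. A \<in> sets borel} \<subseteq> sigma_sets (space M) (Gen u)"
          unfolding sets_MF by blast
        hence "sigma_sets (space M) {G -` A \<inter> space M |A. A \<in> sets borel} \<subseteq> sets (MF u)"
          unfolding sets_MF by (rule sigma_sets_mono)
        thus ?thesis using True by simp
      next
        case False
        have "H -` A \<inter> space M \<in> Ef (Some u)" if "A \<in> sets borel" for A
        proof -
          have "H -` A \<inter> space M = Y u -` (h -` A \<inter> space PS) \<inter> space M"
            unfolding H_def using measurable_space[OF Y_meas] by auto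
          moreover have "h -` A \<inter> space PS \<in> sets PS" using measurable_sets[OF h that] .
          ultimately show ?thesis unfolding Ef_def option.case by blast
        qed
        hence "{H -` A \<inter> space M |A. A \<in> sets borel} \<subseteq> Ef (Some u)" by blast
        hence "sigma_sets (space M) {H -` A \<inter> space M |A. A \<in> sets borel} \<subseteq> sigma_sets (space M) (Ef (Some u))"
          by (rule sigma_sets_subseteq)
        thus ?thesis using False by simp
      qed
    qed
  qed
  have P: "(\<Prod>i\<in>UNIV. case_bool G H i w) = G w * h (Y u w)" for w
    by (simp add: UNIV_bool H_def mult.commute)
  have F1: "(\<integral>\<^sup>+w. (\<Prod>i\<in>UNIV. case_bool G H i w) \<partial>M) = (\<Prod>i\<in>UNIV. \<integral>\<^sup>+w. case_bool G H i w \<partial>M)"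
    using ind by (intro indep_vars_nn_integral) auto
  have F2: "(\<Prod>i\<in>UNIV. \<integral>\<^sup>+w. case_bool G H i w \<partial>M) = (\<integral>\<^sup>+w. G w \<partial>M) * (\<integral>\<^sup>+w. H w \<partial>M)"
    by (simp add: UNIV_bool mult.commute)
  from F1 F2 have "(\<integral>\<^sup>+w. G w * h (Y u w) \<partial>M) = (\<integral>\<^sup>+w. G w \<partial>M) * (\<integral>\<^sup>+w. H w \<partial>M)"
    unfolding P by (rule trans)
  thus ?thesis unfolding H_def .
qed

end

context bandit begin

lemma Y_dist:
  fixes h :: "(nat \<Rightarrow> real) \<Rightarrow> ennreal"
  assumes h: "h \<in> borel_measurable PS"
  shows "(\<integral>\<^sup>+w. h (Y u w) \<partial>M) = (\<integral>\<^sup>+w. h (Y 0 w) \<partial>M)"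
proof -
  have d: "distr M PS (Y u) = distr M PS (Y 0)"
    using X_ident[of u] by (simp add: Y_fun[symmetric])
  have "(\<integral>\<^sup>+w. h (Y u w) \<partial>M) = (\<integral>\<^sup>+f. h f \<partial>distr M PS (Y u))"
    using h by (simp add: nn_integral_distr)
  also have "\<dots> = (\<integral>\<^sup>+f. h f \<partial>distr M PS (Y 0))" by (simp add: d)
  also have "\<dots> = (\<integral>\<^sup>+w. h (Y 0 w) \<partial>M)"
    using h by (simp add: nn_integral_distr)
  finally show ?thesis .
qed

definition incr :: "(nat set \<Rightarrow> bool) \<Rightarrow> ((nat \<Rightarrow> real) \<Rightarrow> real) \<Rightarrow> real \<Rightarrow> real \<Rightarrow> nat \<Rightarrow> 'a \<Rightarrow> real" where
  "incr P \<phi> l \<psi> v w = (if P (A v w) then l * \<phi> (Y v w) - \<psi> else 0)"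

lemma incr_meas:
  assumes \<phi>: "\<phi> \<in> borel_measurable PS" and v: "v < u"
  shows "incr P \<phi> l \<psi> v \<in> borel_measurable (MF u)"
proof -
  note [measurable] = measurable_compose[OF Y_meas_MF[OF v] \<phi>]
  have "v \<le> u" using v by simp
  hence Am: "A v \<in> measurable (MF u) (count_space UNIV)" by (rule A_meas_MF)
  have [measurable]: "(\<lambda>x. P (A v x)) \<in> measurable (MF u) (count_space UNIV)"
    by (rule measurable_compose[OF Am measurable_count_space])
  show ?thesis unfolding incr_def by measurable
qed

lemma super:
  assumes \<phi>: "\<phi> \<in> borel_measurable PS"
    and int: "integrable M (\<lambda>w. exp (l * \<phi> (Y 0 w)))"
    and mgf: "(\<integral>w. exp (l * \<phi> (Y 0 w)) \<partial>M) \<le> exp \<psi>"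
  shows "(\<integral>\<^sup>+w. ennreal (exp (\<Sum>v\<in>{1..<u}. incr P \<phi> l \<psi> v w)) \<partial>M) \<le> 1"
proof (induction u)
  case 0 thus ?case by (simp add: emeasure_space_1)
next
  case (Suc u)
  show ?case
  proof (cases "u = 0")
    case True thus ?thesis using Suc by simp
  next
    case False
    define Zu where "Zu w = exp (\<Sum>v\<in>{1..<u}. incr P \<phi> l \<psi> v w)" for w
    have Zm: "Zu \<in> borel_measurable (MF u)"
    proof -
      have "(\<lambda>w. \<Sum>v\<in>{1..<u}. incr P \<phi> l \<psi> v w) \<in> borel_measurable (MF u)"
        by (intro borel_measurable_sum) (auto intro: incr_meas[OF \<phi>])
      thus ?thesis unfolding Zu_def by measurable
    qed
    have Am: "A u \<in> measurable (MF u) (count_space UNIV)" by (rule A_meas_MF) simp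
    have [measurable]: "(\<lambda>x. P (A u x)) \<in> measurable (MF u) (count_space UNIV)"
      by (rule measurable_compose[OF Am measurable_count_space])
    have Pm: "{w \<in> space (MF u). P (A u w)} \<in> sets (MF u)" by measurable
    define G1 where "G1 w = ennreal (Zu w * (if P (A u w) then 0 else 1))" for w
    define G2 where "G2 w = ennreal (Zu w * (if P (A u w) then 1 else 0))" for w
    define h where "h f = ennreal (exp (l * \<phi> f - \<psi>))" for f
    have hm: "h \<in> borel_measurable PS" unfolding h_def using \<phi> by measurable
    have G1m: "G1 \<in> borel_measurable (MF u)" unfolding G1_def using Zm Pm by measurable
    have G2m: "G2 \<in> borel_measurable (MF u)" unfolding G2_def using Zm Pm by measurable
    have G1M: "G1 \<in> borel_measurable M"
      by (rule measurableI) (use measurable_space[OF G1m] measurable_sets[OF G1m] sets_MF_sub in auto)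
    have G2M: "G2 \<in> borel_measurable M"
      by (rule measurableI) (use measurable_space[OF G2m] measurable_sets[OF G2m] sets_MF_sub in auto)
    have hYm: "(\<lambda>w. h (Y u w)) \<in> borel_measurable M" using hm by measurable
    have split: "{1..<Suc u} = insert u {1..<u}" using False by auto
    have pw: "ennreal (exp (\<Sum>v\<in>{1..<Suc u}. incr P \<phi> l \<psi> v w)) = G1 w + G2 w * h (Y u w)" for w
    proof -
      have "(\<Sum>v\<in>{1..<Suc u}. incr P \<phi> l \<psi> v w) = incr P \<phi> l \<psi> u w + (\<Sum>v\<in>{1..<u}. incr P \<phi> l \<psi> v w)"
        unfolding split by simp
      hence "exp (\<Sum>v\<in>{1..<Suc u}. incr P \<phi> l \<psi> v w) = exp (incr P \<phi> l \<psi> u w) * Zu w"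
        by (simp add: Zu_def exp_add)
      also have "\<dots> = Zu w * (if P (A u w) then 0 else 1) + Zu w * (if P (A u w) then 1 else 0) * exp (l * \<phi> (Y u w) - \<psi>)"
        by (simp add: incr_def)
      finally show ?thesis
        unfolding G1_def G2_def h_def
        by (simp add: Zu_def ennreal_mult'[symmetric] ennreal_plus[symmetric] del: ennreal_plus)
    qed
    have "(\<integral>\<^sup>+w. ennreal (exp (\<Sum>v\<in>{1..<Suc u}. incr P \<phi> l \<psi> v w)) \<partial>M) = (\<integral>\<^sup>+w. G1 w + G2 w * h (Y u w) \<partial>M)"
      by (rule nn_integral_cong) (rule pw)
    also have "\<dots> = (\<integral>\<^sup>+w. G1 w \<partial>M) + (\<integral>\<^sup>+w. G2 w * h (Y u w) \<partial>M)"
      using G1M G2M hYm by (intro nn_integral_add) auto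
    also have "(\<integral>\<^sup>+w. G2 w * h (Y u w) \<partial>M) = (\<integral>\<^sup>+w. G2 w \<partial>M) * (\<integral>\<^sup>+w. h (Y u w) \<partial>M)"
      by (rule indep_nn[OF G2m hm])
    also have "(\<integral>\<^sup>+w. h (Y u w) \<partial>M) \<le> 1"
    proof -
      have "(\<integral>\<^sup>+w. h (Y u w) \<partial>M) = (\<integral>\<^sup>+w. h (Y 0 w) \<partial>M)" by (rule Y_dist[OF hm])
      also have "\<dots> = ennreal (\<integral>w. exp (l * \<phi> (Y 0 w)) * exp (-\<psi>) \<partial>M)"
        unfolding h_def using int by (subst nn_integral_eq_integral[symmetric]) (auto simp: exp_diff exp_minus field_simps)
      also have "\<dots> \<le> 1"
      proof -
        have "(\<integral>w. exp (l * \<phi> (Y 0 w)) * exp (-\<psi>) \<partial>M) = (\<integral>w. exp (l * \<phi> (Y 0 w)) \<partial>M) * exp (-\<psi>)"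
          by simp
        also have "\<dots> \<le> exp \<psi> * exp (-\<psi>)" using mgf by (intro mult_right_mono) auto
        also have "\<dots> = 1" by (simp add: exp_minus)
        finally show ?thesis by simp
      qed
      finally show ?thesis .
    qed
    hence "(\<integral>\<^sup>+w. G2 w \<partial>M) * (\<integral>\<^sup>+w. h (Y u w) \<partial>M) \<le> (\<integral>\<^sup>+w. G2 w \<partial>M)"
      by (metis mult.right_neutral mult_left_mono zero_le)
    hence "(\<integral>\<^sup>+w. G1 w \<partial>M) + (\<integral>\<^sup>+w. G2 w \<partial>M) * (\<integral>\<^sup>+w. h (Y u w) \<partial>M) \<le> (\<integral>\<^sup>+w. G1 w \<partial>M) + (\<integral>\<^sup>+w. G2 w \<partial>M)"
      by (rule add_left_mono)
    also have "\<dots> = (\<integral>\<^sup>+w. G1 w + G2 w \<partial>M)"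
      using G1M G2M by (intro nn_integral_add[symmetric]) auto
    also have "\<dots> = (\<integral>\<^sup>+w. ennreal (exp (\<Sum>v\<in>{1..<u}. incr P \<phi> l \<psi> v w)) \<partial>M)"
    proof (intro nn_integral_cong)
      fix w
      have "Zu w \<ge> 0" by (simp add: Zu_def)
      thus "G1 w + G2 w = ennreal (exp (\<Sum>v\<in>{1..<u}. incr P \<phi> l \<psi> v w))"
        unfolding G1_def G2_def by (simp add: Zu_def)
    qed
    also have "\<dots> \<le> 1" by (rule Suc.IH)
    finally show ?thesis .
  qed
qed

lemma conc:
  assumes \<phi>: "\<phi> \<in> borel_measurable PS"
    and int: "integrable M (\<lambda>w. exp (l * \<phi> (Y 0 w)))"
    and mgf: "(\<integral>w. exp (l * \<phi> (Y 0 w)) \<partial>M) \<le> exp \<psi>"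
    and l: "l \<ge> 0"
  shows "measure M {w \<in> space M. (\<Sum>v\<in>{1..<t}. if P (A v w) then 1 else 0) = real m \<and>
            r \<le> (\<Sum>v\<in>{1..<t}. if P (A v w) then \<phi> (Y v w) else 0)} \<le> exp (real m * \<psi> - l * r)"
proof -
  have [measurable]: "(\<lambda>w. P (A v w)) \<in> measurable M (count_space UNIV)" for v
    by (rule measurable_compose[OF A_meas measurable_count_space])
  have [measurable]: "(\<lambda>w. \<phi> (Y v w)) \<in> borel_measurable M" for v
    by (rule measurable_compose[OF Y_meas \<phi>])
  define E where "E = {w \<in> space M. (\<Sum>v\<in>{1..<t}. if P (A v w) then 1 else 0) = real m \<and>
            r \<le> (\<Sum>v\<in>{1..<t}. if P (A v w) then \<phi> (Y v w) else 0)}"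
  have Em: "E \<in> sets M" unfolding E_def by measurable
  define c where "c = exp (l * r - real m * \<psi>)"
  have c0: "c > 0" by (simp add: c_def)
  have incr_sum: "(\<Sum>v\<in>{1..<t}. incr P \<phi> l \<psi> v w) =
      l * (\<Sum>v\<in>{1..<t}. if P (A v w) then \<phi> (Y v w) else 0) - \<psi> * (\<Sum>v\<in>{1..<t}. if P (A v w) then 1 else 0)" for w
  proof -
    have "(\<Sum>v\<in>{1..<t}. incr P \<phi> l \<psi> v w) = (\<Sum>v\<in>{1..<t}. l * (if P (A v w) then \<phi> (Y v w) else 0) - \<psi> * (if P (A v w) then 1 else 0))"
      by (intro sum.cong) (auto simp: incr_def)
    also have "\<dots> = l * (\<Sum>v\<in>{1..<t}. if P (A v w) then \<phi> (Y v w) else 0) - \<psi> * (\<Sum>v\<in>{1..<t}. if P (A v w) then 1 else 0)"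
      by (simp add: sum_subtractf sum_distrib_left)
    finally show ?thesis .
  qed
  have pw: "ennreal c * indicator E w \<le> ennreal (exp (\<Sum>v\<in>{1..<t}. incr P \<phi> l \<psi> v w))" for w
  proof (cases "w \<in> E")
    case True
    hence "l * r \<le> l * (\<Sum>v\<in>{1..<t}. if P (A v w) then \<phi> (Y v w) else 0)"
      using l unfolding E_def by (intro mult_left_mono) auto
    hence "l * r - real m * \<psi> \<le> (\<Sum>v\<in>{1..<t}. incr P \<phi> l \<psi> v w)"
      using True unfolding incr_sum E_def by (auto simp: mult.commute)
    hence "c \<le> exp (\<Sum>v\<in>{1..<t}. incr P \<phi> l \<psi> v w)" unfolding c_def by simp
    thus ?thesis using True by (simp add: ennreal_leI)
  qed simp
  have "emeasure M E * ennreal c = (\<integral>\<^sup>+w. ennreal c * indicator E w \<partial>M)"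
    using Em by (simp add: nn_integral_cmult_indicator mult.commute)
  also have "\<dots> \<le> (\<integral>\<^sup>+w. ennreal (exp (\<Sum>v\<in>{1..<t}. incr P \<phi> l \<psi> v w)) \<partial>M)"
    by (intro nn_integral_mono pw)
  also have "\<dots> \<le> 1" by (rule super[OF \<phi> int mgf])
  finally have "ennreal (measure M E * c) \<le> 1"
    using c0 by (simp add: emeasure_eq_measure ennreal_mult)
  hence "measure M E * c \<le> 1" by (simp add: ennreal_le_1)
  hence "measure M E \<le> 1 / c" using c0 by (simp add: field_simps)
  also have "1 / c = exp (real m * \<psi> - l * r)" by (simp add: c_def exp_diff exp_minus field_simps)
  finally show ?thesis unfolding E_def .
qed

end

lemma exp_m3ln: "(t::real) > 0 \<Longrightarrow> exp (-(3 * ln t)) = 1 / t^3"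
proof -
  assume t: "t > 0"
  have "3 * ln t = ln (t^3)" using t by (simp add: ln_realpow)
  hence "exp (3 * ln t) = t^3" using t by simp
  thus ?thesis by (simp add: exp_minus inverse_eq_divide)
qed

lemma num_mean:
  fixes m :: nat and L :: real assumes m: "m \<ge> 1" and L: "L \<ge> 0"
  shows "exp (real m * (sqrt (6*L/m))^2 / 2 - sqrt (6*L/m) * (real m * sqrt (6*L/m))) = exp (-(3*L))"
proof -
  have s: "(sqrt (6*L/m))^2 = 6*L/m" using L m by simp
  have "real m * (sqrt (6*L/m))^2 / 2 - sqrt (6*L/m) * (real m * sqrt (6*L/m)) = - (real m * (sqrt (6*L/m))^2 / 2)"
    by (simp add: power2_eq_square algebra_simps)
  also have "\<dots> = -(3*L)" using m by (simp add: s)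
  finally show ?thesis by simp
qed

lemma num_prod:
  fixes m :: nat and L :: real assumes m: "m \<ge> 1" and L: "L \<ge> 0"
  defines "\<epsilon> \<equiv> 14 * max (3*L/m) (sqrt (3*L/m))"
  defines "lm \<equiv> min (\<epsilon>/98) (1/7)"
  shows "real m * (49 * lm^2) - lm * (real m * \<epsilon>) \<le> -(3*L)"
proof -
  have m0: "real m > 0" using m by simp
  have e1: "\<epsilon> \<ge> 14 * (3*L/m)" and e2: "\<epsilon> \<ge> 14 * sqrt (3*L/m)" unfolding \<epsilon>_def by auto
  show ?thesis
  proof (cases "\<epsilon> \<le> 14")
    case True
    hence l: "lm = \<epsilon>/98" unfolding lm_def by (simp add: min_def)
    have q: "0 \<le> 3*L/m" using L m0 by simp
    have "(14 * sqrt (3*L/m))^2 \<le> \<epsilon>^2" using e2 q by (intro power_mono) auto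
    hence "196 * (3*L/m) \<le> \<epsilon>^2" using q by (simp add: power_mult_distrib)
    hence "real m * (196 * (3*L/m)) \<le> real m * \<epsilon>^2" using m0 by (intro mult_left_mono) auto
    hence "588 * L \<le> real m * \<epsilon>^2" using m0 by (simp add: field_simps)
    moreover have "real m * (49 * lm^2) - lm * (real m * \<epsilon>) = - (real m * \<epsilon>^2 / 196)"
      unfolding l by (simp add: power2_eq_square field_simps)
    ultimately show ?thesis by linarith
  next
    case False
    hence l: "lm = 1/7" unfolding lm_def by (simp add: min_def)
    have "real m * (14 * (3*L/m)) \<le> real m * \<epsilon>" using e1 m0 by (intro mult_left_mono) auto
    hence "42 * L \<le> real m * \<epsilon>" using m0 by (simp add: field_simps)
    moreover have "real m * (49 * lm^2) - lm * (real m * \<epsilon>) = real m * (1 - \<epsilon>/7)"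
      unfolding l by (simp add: power2_eq_square field_simps)
    moreover have "real m * (1 - \<epsilon>/7) \<le> real m * (- \<epsilon>/14)" using False m0 by (intro mult_left_mono) auto
    ultimately show ?thesis by (simp add: field_simps) 
  qed
qed

context bandit begin

lemma bad_mean:
  fixes \<mu> :: "nat \<Rightarrow> real" and P :: "nat set \<Rightarrow> bool" and k m t :: nat and \<sigma> :: real
  assumes subgauss: "\<And>s. integrable M (\<lambda>w. exp (s * (X 0 w k - \<mu> k))) \<and>
                     integral\<^sup>L M (\<lambda>w. exp (s * (X 0 w k - \<mu> k))) \<le> exp (s\<^sup>2 / 2)"
    and k: "k < n" and \<sigma>: "\<sigma>^2 = 1" and m: "m \<ge> 1" and t: "t \<ge> 1"
  shows "measure M {w \<in> space M. (\<Sum>v\<in>{1..<t}. if P (A v w) then 1 else 0) = real m \<and>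
            real m * sqrt (6 * ln t / m) \<le> (\<Sum>v\<in>{1..<t}. if P (A v w) then \<sigma> * (Y v w k - \<mu> k) else 0)}
         \<le> 1 / (real t)^3"
proof -
  define l where "l = sqrt (6 * ln t / m)"
  define \<phi> where "\<phi> f = \<sigma> * (f k - \<mu> k)" for f :: "nat \<Rightarrow> real"
  have L: "ln (real t) \<ge> 0" using t by simp
  have [measurable]: "(\<lambda>f. f k) \<in> borel_measurable PS" using k by (intro measurable_component_singleton) simp
  have \<phi>m: "\<phi> \<in> borel_measurable PS" unfolding \<phi>_def by measurable
  have Y0: "\<phi> (Y 0 w) = \<sigma> * (X 0 w k - \<mu> k)" for w unfolding \<phi>_def Y_def using k by simp
  have eq: "l * \<phi> (Y 0 w) = (l * \<sigma>) * (X 0 w k - \<mu> k)" for w unfolding Y0 by simp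
  have int: "integrable M (\<lambda>w. exp (l * \<phi> (Y 0 w)))" unfolding eq using subgauss by blast
  have mgf: "(\<integral>w. exp (l * \<phi> (Y 0 w)) \<partial>M) \<le> exp (l^2/2)"
    unfolding eq using subgauss[of "l * \<sigma>"] \<sigma> by (simp add: power_mult_distrib)
  have "measure M {w \<in> space M. (\<Sum>v\<in>{1..<t}. if P (A v w) then 1 else 0) = real m \<and>
            real m * l \<le> (\<Sum>v\<in>{1..<t}. if P (A v w) then \<phi> (Y v w) else 0)} \<le> exp (real m * (l^2/2) - l * (real m * l))"
    by (rule conc[OF \<phi>m int mgf]) (use L in \<open>simp add: l_def\<close>)
  also have "\<dots> = exp (-(3 * ln t))" unfolding l_def using num_mean[OF m L] by simp
  also have "\<dots> = 1 / (real t)^3" using t by (intro exp_m3ln) simp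
  finally show ?thesis unfolding l_def \<phi>_def .
qed

lemma bad_prod:
  fixes \<mu> :: "nat \<Rightarrow> real" and \<Sigma> :: "nat \<Rightarrow> nat \<Rightarrow> real" and P :: "nat set \<Rightarrow> bool" and m t i j :: nat and \<sigma> :: real
  assumes subgauss: "\<And>k s. k < n \<Longrightarrow> integrable M (\<lambda>w. exp (s * (X 0 w k - \<mu> k))) \<and>
                     integral\<^sup>L M (\<lambda>w. exp (s * (X 0 w k - \<mu> k))) \<le> exp (s\<^sup>2 / 2)"
    and Sigma_def: "\<And>k l. \<Sigma> k l = integral\<^sup>L M (\<lambda>w. (X 0 w k - \<mu> k) * (X 0 w l - \<mu> l))"
    and ij: "i < n" "j < n" and \<sigma>: "\<bar>\<sigma>\<bar> = 1" and m: "m \<ge> 1" and t: "t \<ge> 1"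
  shows "measure M {w \<in> space M. (\<Sum>v\<in>{1..<t}. if P (A v w) then 1 else 0) = real m \<and>
            real m * (14 * max (3 * ln t / m) (sqrt (3 * ln t / m))) \<le>
              (\<Sum>v\<in>{1..<t}. if P (A v w) then \<sigma> * ((Y v w i - \<mu> i) * (Y v w j - \<mu> j) - \<Sigma> i j) else 0)}
         \<le> 1 / (real t)^3"
proof -
  define \<epsilon> where "\<epsilon> = 14 * max (3 * ln t / m) (sqrt (3 * ln t / m))"
  define l where "l = min (\<epsilon>/98) (1/7)"
  define \<phi> where "\<phi> f = \<sigma> * ((f i - \<mu> i) * (f j - \<mu> j) - \<Sigma> i j)" for f :: "nat \<Rightarrow> real"
  have L: "ln (real t) \<ge> 0" using t by simp
  have "0 \<le> sqrt (3 * ln t / m)" using L by simp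
  hence "0 \<le> max (3 * ln t / m) (sqrt (3 * ln t / m))" by (rule order_trans[OF _ max.cobounded2])
  hence e0: "\<epsilon> \<ge> 0" unfolding \<epsilon>_def by simp
  have l0: "l \<ge> 0" and l7: "l \<le> 1/7" unfolding l_def using e0 by auto
  have [measurable]: "(\<lambda>f. f k) \<in> borel_measurable PS" if "k < n" for k using that by (intro measurable_component_singleton) simp
  note [measurable] = this[OF ij(1)] this[OF ij(2)]
  have \<phi>m: "\<phi> \<in> borel_measurable PS" unfolding \<phi>_def by measurable
  have Y0: "\<phi> (Y 0 w) = \<sigma> * ((X 0 w i - \<mu> i) * (X 0 w j - \<mu> j) - \<Sigma> i j)" for w
    unfolding \<phi>_def Y_def using ij by simp
  have eq: "l * \<phi> (Y 0 w) = (l * \<sigma>) * ((X 0 w i - \<mu> i) * (X 0 w j - \<mu> j) - \<Sigma> i j)" for w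
    unfolding Y0 by simp
  have lb: "\<bar>l * \<sigma>\<bar> \<le> 1/7" using l0 l7 \<sigma> by (simp add: abs_mult)
  have xm: "(\<lambda>w. X 0 w k - \<mu> k) \<in> borel_measurable M" for k using X_meas by measurable
  have pm: "integrable M (\<lambda>w. exp ((l*\<sigma>) * ((X 0 w i - \<mu> i) * (X 0 w j - \<mu> j) - \<Sigma> i j))) \<and>
      (\<integral>w. exp ((l*\<sigma>) * ((X 0 w i - \<mu> i) * (X 0 w j - \<mu> j) - \<Sigma> i j)) \<partial>M) \<le> exp (49 * (l*\<sigma>)^2)"
    by (rule prod_mgf[OF M xm xm subgauss[OF ij(1)] subgauss[OF ij(2)] Sigma_def lb])
  have int: "integrable M (\<lambda>w. exp (l * \<phi> (Y 0 w)))" unfolding eq using pm by blast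
  have "\<sigma>^2 = \<bar>\<sigma>\<bar>^2" by simp
  hence "\<sigma>^2 = 1" using \<sigma> by simp
  hence s2: "(l*\<sigma>)^2 = l^2" by (simp add: power_mult_distrib)
  have mgf: "(\<integral>w. exp (l * \<phi> (Y 0 w)) \<partial>M) \<le> exp (49 * l^2)"
    unfolding eq using pm s2 by simp
  have "measure M {w \<in> space M. (\<Sum>v\<in>{1..<t}. if P (A v w) then 1 else 0) = real m \<and>
            real m * \<epsilon> \<le> (\<Sum>v\<in>{1..<t}. if P (A v w) then \<phi> (Y v w) else 0)} \<le> exp (real m * (49 * l^2) - l * (real m * \<epsilon>))"
    by (rule conc[OF \<phi>m int mgf l0])
  also have "\<dots> \<le> exp (-(3 * ln t))"
    using num_prod[OF m L] L unfolding l_def \<epsilon>_def by simp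
  also have "\<dots> = 1 / (real t)^3" using t by (intro exp_m3ln) simp
  finally show ?thesis unfolding \<epsilon>_def \<phi>_def .
qed

end

lemma measure_Union_list:
  assumes "\<forall>B\<in>set Bs. B \<in> sets M"
  shows "measure M (\<Union>(set Bs)) \<le> sum_list (map (measure M) Bs)"
  using assms
proof (induction Bs)
  case Nil thus ?case by simp
next
  case (Cons B Bs)
  have "measure M (\<Union>(set (B # Bs))) = measure M (B \<union> \<Union>(set Bs))" by simp
  also have "\<dots> \<le> measure M B + measure M (\<Union>(set Bs))"
    using Cons.prems by (intro measure_Un_le) auto
  also have "\<dots> \<le> measure M B + sum_list (map (measure M) Bs)" using Cons by simp
  finally show ?case by simp
qed

lemma sum_list_bound:
  assumes "\<forall>B\<in>set Bs. f B \<le> (c::real)"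
  shows "sum_list (map f Bs) \<le> real (length Bs) * c"
  using assms by (induction Bs) (auto simp: algebra_simps)

lemma sum_if_card: "finite V \<Longrightarrow> (\<Sum>v\<in>V. if Q v then 1 else 0) = real (card {v\<in>V. Q v})"
proof -
  assume "finite V"
  hence "(\<Sum>v\<in>V. if Q v then 1 else (0::real)) = (\<Sum>v\<in>{v\<in>V. Q v}. 1)" by (rule sum.inter_filter[symmetric])
  thus ?thesis by simp
qed

lemma sum_if_filter: "finite V \<Longrightarrow> (\<Sum>v\<in>V. if Q v then f v else 0) = (\<Sum>v\<in>{v\<in>V. Q v}. (f v :: real))"
  by (rule sum.inter_filter[symmetric])

context bandit begin

lemma Ncnt_real: "real (Ncnt A t i w) = (\<Sum>u\<in>{1..<t}. if i \<in> A u w then 1 else 0)"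
  unfolding Ncnt_def by (simp add: sum_if_card)

lemma Npair_real: "real (Npair A t i j w) = (\<Sum>u\<in>{1..<t}. if i \<in> A u w \<and> j \<in> A u w then 1 else 0)"
  unfolding Npair_def by (simp add: sum_if_card)

lemma memA_meas[measurable]: "(\<lambda>w. k \<in> A v w) \<in> measurable M (count_space UNIV)"
  by (rule measurable_compose[OF A_meas measurable_count_space])

lemma X_meas'[measurable]: "(\<lambda>w. X u w k) \<in> borel_measurable M" by (rule X_meas)

lemma Ncnt_meas[measurable]: "(\<lambda>w. real (Ncnt A t i w)) \<in> borel_measurable M"
  unfolding Ncnt_real by measurable

lemma Npair_meas[measurable]: "(\<lambda>w. real (Npair A t i j w)) \<in> borel_measurable M"
  unfolding Npair_real by measurable

lemma emp_mean_meas[measurable]: "(\<lambda>w. emp_mean A X t i w) \<in> borel_measurable M"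
  unfolding emp_mean_def by measurable

lemma emp_cov_meas[measurable]: "(\<lambda>w. emp_cov A X t i j w) \<in> borel_measurable M"
  unfolding emp_cov_def by measurable

lemma gwidth_meas[measurable]: "(\<lambda>w. gwidth A t i j w) \<in> borel_measurable M"
  unfolding gwidth_def Let_def by measurable

end

context bandit begin

definition BM :: "(nat set \<Rightarrow> bool) \<Rightarrow> (nat \<Rightarrow> real) \<Rightarrow> nat \<Rightarrow> real \<Rightarrow> nat \<Rightarrow> nat \<Rightarrow> 'a set" where
  "BM P \<mu> k \<sigma> t m = {w \<in> space M. (\<Sum>v\<in>{1..<t}. if P (A v w) then 1 else 0) = real m \<and>
            real m * sqrt (6 * ln t / m) \<le> (\<Sum>v\<in>{1..<t}. if P (A v w) then \<sigma> * (Y v w k - \<mu> k) else 0)}"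

definition BP :: "(nat \<Rightarrow> real) \<Rightarrow> (nat \<Rightarrow> nat \<Rightarrow> real) \<Rightarrow> nat \<Rightarrow> nat \<Rightarrow> real \<Rightarrow> nat \<Rightarrow> nat \<Rightarrow> 'a set" where
  "BP \<mu> \<Sigma> i j \<sigma> t m = {w \<in> space M. (\<Sum>v\<in>{1..<t}. if i \<in> A v w \<and> j \<in> A v w then 1 else 0) = real m \<and>
            real m * (14 * max (3 * ln t / m) (sqrt (3 * ln t / m))) \<le>
              (\<Sum>v\<in>{1..<t}. if i \<in> A v w \<and> j \<in> A v w then \<sigma> * ((Y v w i - \<mu> i) * (Y v w j - \<mu> j) - \<Sigma> i j) else 0)}"

lemma Yk_meas: "k < n \<Longrightarrow> (\<lambda>w. Y v w k) \<in> borel_measurable M"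
  by (rule measurable_compose[OF Y_meas measurable_component_singleton]) simp

lemma Y_X: "k < n \<Longrightarrow> Y v w k = X v w k" by (simp add: Y_def)

lemma not_BM:
  assumes w: "w \<in> space M" and k: "k < n" and n1: "w \<notin> BM P \<mu> k 1 t m" and n2: "w \<notin> BM P \<mu> k (-1) t m"
    and m: "m = card {v\<in>{1..<t}. P (A v w)}"
  shows "\<bar>\<Sum>v\<in>{v\<in>{1..<t}. P (A v w)}. (X v w k - \<mu> k)\<bar> \<le> real m * sqrt (6 * ln t / real m)"
proof -
  have c: "(\<Sum>v\<in>{1..<t}. if P (A v w) then 1 else 0) = real m" unfolding m by (simp add: sum_if_card)
  have s: "(\<Sum>v\<in>{1..<t}. if P (A v w) then \<sigma> * (Y v w k - \<mu> k) else 0) = \<sigma> * (\<Sum>v\<in>{v\<in>{1..<t}. P (A v w)}. (X v w k - \<mu> k))" for \<sigma>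
    by (simp add: sum_if_filter sum_distrib_left Y_X[OF k])
  have mem: "w \<in> BM P \<mu> k \<sigma> t m \<longleftrightarrow> real m * sqrt (6 * ln t / m) \<le> \<sigma> * (\<Sum>v\<in>{v\<in>{1..<t}. P (A v w)}. (X v w k - \<mu> k))" for \<sigma>
    unfolding BM_def mem_Collect_eq s c using w by blast
  have "\<not> (real m * sqrt (6 * ln t / m) \<le> 1 * (\<Sum>v\<in>{v\<in>{1..<t}. P (A v w)}. (X v w k - \<mu> k)))"
    using n1 mem[of 1] by blast
  moreover have "\<not> (real m * sqrt (6 * ln t / m) \<le> -1 * (\<Sum>v\<in>{v\<in>{1..<t}. P (A v w)}. (X v w k - \<mu> k)))"
    using n2 mem[of "-1"] by blast
  ultimately show ?thesis by linarith
qed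

lemma not_BP:
  assumes w: "w \<in> space M" and ij: "i < n" "j < n" and n1: "w \<notin> BP \<mu> \<Sigma> i j 1 t m" and n2: "w \<notin> BP \<mu> \<Sigma> i j (-1) t m"
    and m: "m = card {v\<in>{1..<t}. i \<in> A v w \<and> j \<in> A v w}"
  shows "\<bar>\<Sum>v\<in>{v\<in>{1..<t}. i \<in> A v w \<and> j \<in> A v w}. ((X v w i - \<mu> i) * (X v w j - \<mu> j) - \<Sigma> i j)\<bar>
          \<le> real m * (14 * max (3 * ln t / m) (sqrt (3 * ln t / m)))"
proof -
  have c: "(\<Sum>v\<in>{1..<t}. if i \<in> A v w \<and> j \<in> A v w then 1 else 0) = real m" unfolding m by (simp add: sum_if_card)
  have s: "(\<Sum>v\<in>{1..<t}. if i \<in> A v w \<and> j \<in> A v w then \<sigma> * ((Y v w i - \<mu> i) * (Y v w j - \<mu> j) - \<Sigma> i j) else 0)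
     = \<sigma> * (\<Sum>v\<in>{v\<in>{1..<t}. i \<in> A v w \<and> j \<in> A v w}. ((X v w i - \<mu> i) * (X v w j - \<mu> j) - \<Sigma> i j))" for \<sigma>
    by (simp add: sum_if_filter sum_distrib_left Y_X[OF ij(1)] Y_X[OF ij(2)])
  have mem: "w \<in> BP \<mu> \<Sigma> i j \<sigma> t m \<longleftrightarrow> real m * (14 * max (3 * ln t / m) (sqrt (3 * ln t / m))) \<le> \<sigma> * (\<Sum>v\<in>{v\<in>{1..<t}. i \<in> A v w \<and> j \<in> A v w}. ((X v w i - \<mu> i) * (X v w j - \<mu> j) - \<Sigma> i j))" for \<sigma>
    unfolding BP_def mem_Collect_eq s c using w by blast
  have "\<not> (real m * (14 * max (3 * ln t / m) (sqrt (3 * ln t / m))) \<le> 1 * (\<Sum>v\<in>{v\<in>{1..<t}. i \<in> A v w \<and> j \<in> A v w}. ((X v w i - \<mu> i) * (X v w j - \<mu> j) - \<Sigma> i j)))"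
    using n1 mem[of 1] by blast
  moreover have "\<not> (real m * (14 * max (3 * ln t / m) (sqrt (3 * ln t / m))) \<le> -1 * (\<Sum>v\<in>{v\<in>{1..<t}. i \<in> A v w \<and> j \<in> A v w}. ((X v w i - \<mu> i) * (X v w j - \<mu> j) - \<Sigma> i j)))"
    using n2 mem[of "-1"] by blast
  ultimately show ?thesis by linarith
qed

lemma emp_mean_eq:
  assumes "Ncnt A t i w > 0"
  shows "emp_mean A X t i w = \<mu> i + (\<Sum>v\<in>{v\<in>{1..<t}. i \<in> A v w}. (X v w i - \<mu> i)) / real (Ncnt A t i w)"
proof -
  define S where "S = {v\<in>{1..<t}. i \<in> A v w}"
  have N: "Ncnt A t i w = card S" unfolding Ncnt_def S_def ..
  have "emp_mean A X t i w = (\<Sum>v\<in>S. X v w i) / real (card S)"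
    unfolding emp_mean_def N S_def by (simp add: sum_if_filter)
  moreover have "(\<Sum>v\<in>S. (X v w i - \<mu> i)) = (\<Sum>v\<in>S. X v w i) - real (card S) * \<mu> i"
    by (simp add: sum_subtractf)
  moreover have "card S > 0" using assms N by simp
  ultimately show ?thesis unfolding N S_def[symmetric] by (simp add: field_simps)
qed

end

context bandit begin

lemma predA_meas[measurable]: "(\<lambda>w. P (A v w)) \<in> measurable M (count_space UNIV)"
  by (rule measurable_compose[OF A_meas measurable_count_space])

lemma BM_sets: "k < n \<Longrightarrow> BM P \<mu> k \<sigma> t m \<in> sets M"
proof -
  assume k: "k < n"
  note [measurable] = Yk_meas[OF k]
  show ?thesis unfolding BM_def by measurable
qed

lemma BP_sets: "i < n \<Longrightarrow> j < n \<Longrightarrow> BP \<mu> \<Sigma> i j \<sigma> t m \<in> sets M"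
proof -
  assume ij: "i < n" "j < n"
  note [measurable] = Yk_meas[OF ij(1)] Yk_meas[OF ij(2)]
  show ?thesis unfolding BP_def by measurable
qed

lemma core:
  fixes \<mu> :: "nat \<Rightarrow> real" and \<Sigma> :: "nat \<Rightarrow> nat \<Rightarrow> real" and t i j :: nat and w :: 'a
  assumes ij: "i < n" "j < n" and w: "w \<in> space M" and N1: "Npair A t i j w \<ge> 1"
    and nb: "\<And>m. m \<in> {1..<t} \<Longrightarrow>
       w \<notin> BM (\<lambda>S. i \<in> S) \<mu> i 1 t m \<and> w \<notin> BM (\<lambda>S. i \<in> S) \<mu> i (-1) t m \<and>
       w \<notin> BM (\<lambda>S. j \<in> S) \<mu> j 1 t m \<and> w \<notin> BM (\<lambda>S. j \<in> S) \<mu> j (-1) t m \<and>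
       w \<notin> BM (\<lambda>S. i \<in> S \<and> j \<in> S) \<mu> i 1 t m \<and> w \<notin> BM (\<lambda>S. i \<in> S \<and> j \<in> S) \<mu> i (-1) t m \<and>
       w \<notin> BM (\<lambda>S. i \<in> S \<and> j \<in> S) \<mu> j 1 t m \<and> w \<notin> BM (\<lambda>S. i \<in> S \<and> j \<in> S) \<mu> j (-1) t m \<and>
       w \<notin> BP \<mu> \<Sigma> i j 1 t m \<and> w \<notin> BP \<mu> \<Sigma> i j (-1) t m"
    and t: "t \<ge> 2"
  shows "\<bar>\<Sigma> i j - emp_cov A X t i j w\<bar> \<le> gwidth A t i j w"
proof -
  define V where "V = {1..<t}"
  define Si where "Si = {v\<in>V. i \<in> A v w}"
  define Sj where "Sj = {v\<in>V. j \<in> A v w}"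
  define Sij where "Sij = {v\<in>V. i \<in> A v w \<and> j \<in> A v w}"
  have L: "ln (real t) \<ge> 0" using t by simp
  have fV: "finite V" unfolding V_def by simp
  have cV: "card V = t - 1" unfolding V_def by simp
  have cSi: "card Si \<le> t - 1" using card_mono[OF fV, of Si] cV unfolding Si_def by auto
  have cSj: "card Sj \<le> t - 1" using card_mono[OF fV, of Sj] cV unfolding Sj_def by auto
  have cSij: "card Sij \<le> t - 1" using card_mono[OF fV, of Sij] cV unfolding Sij_def by auto
  have fSi: "finite Si" "finite Sj" using fV unfolding Si_def Sj_def by auto
  have N: "Npair A t i j w = card Sij" unfolding Npair_def Sij_def V_def ..
  have Ni: "Ncnt A t i w = card Si" unfolding Ncnt_def Si_def V_def ..
  have Nj: "Ncnt A t j w = card Sj" unfolding Ncnt_def Sj_def V_def ..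
  have c1: "card Sij \<ge> 1" using N1 N by simp
  have c2a: "card Sij \<le> card Si" by (rule card_mono[OF fSi(1)]) (auto simp: Sij_def Si_def)
  have c2b: "card Sij \<le> card Sj" by (rule card_mono[OF fSi(2)]) (auto simp: Sij_def Sj_def)
  note c2 = c2a c2b
  have mSi: "card Si \<in> {1..<t}" using c1 c2 cSi t by auto
  have mSj: "card Sj \<in> {1..<t}" using c1 c2 cSj t by auto
  have mSij: "card Sij \<in> {1..<t}" using c1 cSij t by auto
  have hx: "\<bar>\<Sum>v\<in>Si. (X v w i - \<mu> i)\<bar> \<le> real (card Si) * sqrt (6 * ln t / real (card Si))"
    using not_BM[OF w ij(1), of "\<lambda>S. i \<in> S" \<mu> t "card Si"] nb[OF mSi] unfolding Si_def V_def by simp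
  have hy: "\<bar>\<Sum>v\<in>Sj. (X v w j - \<mu> j)\<bar> \<le> real (card Sj) * sqrt (6 * ln t / real (card Sj))"
    using not_BM[OF w ij(2), of "\<lambda>S. j \<in> S" \<mu> t "card Sj"] nb[OF mSj] unfolding Sj_def V_def by simp
  have hxij: "\<bar>\<Sum>v\<in>Sij. (X v w i - \<mu> i)\<bar> \<le> real (card Sij) * sqrt (6 * ln t / real (card Sij))"
    using not_BM[OF w ij(1), of "\<lambda>S. i \<in> S \<and> j \<in> S" \<mu> t "card Sij"] nb[OF mSij] unfolding Sij_def V_def by simp
  have hyij: "\<bar>\<Sum>v\<in>Sij. (X v w j - \<mu> j)\<bar> \<le> real (card Sij) * sqrt (6 * ln t / real (card Sij))"
    using not_BM[OF w ij(2), of "\<lambda>S. i \<in> S \<and> j \<in> S" \<mu> t "card Sij"] nb[OF mSij] unfolding Sij_def V_def by simp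
  have hw: "\<bar>\<Sum>v\<in>Sij. ((X v w i - \<mu> i) * (X v w j - \<mu> j) - \<Sigma> i j)\<bar>
      \<le> real (card Sij) * (14 * max (3 * ln t / real (card Sij)) (sqrt (3 * ln t / real (card Sij))))"
    using not_BP[OF w ij, of \<mu> \<Sigma> t "card Sij"] nb[OF mSij] unfolding Sij_def V_def by simp
  define a where "a = (\<Sum>v\<in>Si. (X v w i - \<mu> i)) / real (card Si)"
  define b where "b = (\<Sum>v\<in>Sj. (X v w j - \<mu> j)) / real (card Sj)"
  have cb: "\<bar>\<Sigma> i j - (\<Sum>v\<in>Sij. ((X v w i - \<mu> i) - a) * ((X v w j - \<mu> j) - b)) / real (card Sij)\<bar>
     \<le> 16 * max (3 * ln t / real (card Sij)) (sqrt (3 * ln t / real (card Sij)))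
       + sqrt (48 * (ln t)^2 / (real (card Sij) * real (card Si))) + sqrt (36 * (ln t)^2 / (real (card Sij) * real (card Sj)))"
    unfolding a_def b_def Si_def Sj_def Sij_def
    by (rule cov_bound[OF fV _ L]) (use c1 hx hy hxij hyij hw in \<open>simp_all add: Si_def Sj_def Sij_def\<close>)
  have em_i: "emp_mean A X t i w = \<mu> i + a"
    unfolding a_def using emp_mean_eq[of t i w \<mu>] Ni c1 c2 by (simp add: Si_def V_def)
  have em_j: "emp_mean A X t j w = \<mu> j + b"
    unfolding b_def using emp_mean_eq[of t j w \<mu>] Nj c1 c2 by (simp add: Sj_def V_def)
  have ec: "emp_cov A X t i j w = (\<Sum>v\<in>Sij. ((X v w i - \<mu> i) - a) * ((X v w j - \<mu> j) - b)) / real (card Sij)"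
  proof -
    have "emp_cov A X t i j w = (\<Sum>v\<in>V. if i \<in> A v w \<and> j \<in> A v w then (X v w i - emp_mean A X t i w) * (X v w j - emp_mean A X t j w) else 0) / real (Npair A t i j w)"
      unfolding emp_cov_def V_def ..
    also have "(\<Sum>v\<in>V. if i \<in> A v w \<and> j \<in> A v w then (X v w i - emp_mean A X t i w) * (X v w j - emp_mean A X t j w) else 0)
       = (\<Sum>v\<in>Sij. (X v w i - emp_mean A X t i w) * (X v w j - emp_mean A X t j w))"
      unfolding Sij_def by (rule sum_if_filter[OF fV])
    finally show ?thesis unfolding N em_i em_j by (simp add: algebra_simps)
  qed
  have gw: "gwidth A t i j w = 16 * max (3 * ln t / real (card Sij)) (sqrt (3 * ln t / real (card Sij)))
       + sqrt (48 * (ln t)^2 / (real (card Sij) * real (card Si))) + sqrt (36 * (ln t)^2 / (real (card Sij) * real (card Sj)))"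
    unfolding gwidth_def Let_def N Ni Nj ..
  show ?thesis unfolding ec gw using cb .
qed

end

context bandit begin

lemma final:
  fixes \<mu> :: "nat \<Rightarrow> real" and \<Sigma> :: "nat \<Rightarrow> nat \<Rightarrow> real" and t i j :: nat
  assumes Sigma_def: "\<And>k l. \<Sigma> k l = integral\<^sup>L M (\<lambda>w. (X 0 w k - \<mu> k) * (X 0 w l - \<mu> l))"
    and subgauss: "\<And>k s. k < n \<Longrightarrow>
                     integrable M (\<lambda>w. exp (s * (X 0 w k - \<mu> k))) \<and>
                     integral\<^sup>L M (\<lambda>w. exp (s * (X 0 w k - \<mu> k))) \<le> exp (s\<^sup>2 / 2)"
    and t: "t \<ge> 2"
    and ij: "i < n" "j < n"
  shows "measure M {w \<in> space M. Npair A t i j w \<ge> 1 \<longrightarrow>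
             \<bar>\<Sigma> i j - emp_cov A X t i j w\<bar> \<le> gwidth A t i j w}
           \<ge> 1 - 10 / (real t)\<^sup>2
       \<and> measure M {w \<in> space M. Npair A t i j w \<ge> 1 \<longrightarrow>
             (let \<Sigma>t = emp_cov A X t i j w + gwidth A t i j w in
               0 \<le> \<Sigma>t - \<Sigma> i j \<and> \<Sigma>t - \<Sigma> i j \<le> 2 * gwidth A t i j w)}
           \<ge> 1 - 10 / (real t)\<^sup>2"
proof -
  have t1: "t \<ge> 1" using t by simp
  have tpos: "real t > 0" using t by simp
  define U where "U f = (\<Union>m\<in>{1..<t}. f m)" for f :: "nat \<Rightarrow> 'a set"
  have Ub: "U f \<in> sets M \<and> measure M (U f) \<le> (real t - 1) / (real t)^3"
    if f: "\<And>m. m \<in> {1..<t} \<Longrightarrow> f m \<in> sets M \<and> measure M (f m) \<le> 1 / (real t)^3" for f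
  proof
    show "U f \<in> sets M" unfolding U_def using f by (intro sets.finite_UN) auto
    have "measure M (U f) \<le> (\<Sum>m\<in>{1..<t}. measure M (f m))"
      unfolding U_def using f by (intro measure_UNION_le) auto
    also have "\<dots> \<le> (\<Sum>m\<in>{1..<t}. 1 / (real t)^3)" using f by (intro sum_mono) auto
    also have "\<dots> = (real t - 1) / (real t)^3" using t1 by (simp add: of_nat_diff)
    finally show "measure M (U f) \<le> (real t - 1) / (real t)^3" .
  qed
  have BMb: "BM P \<mu> k \<sigma> t m \<in> sets M \<and> measure M (BM P \<mu> k \<sigma> t m) \<le> 1 / (real t)^3"
    if k: "k < n" and \<sigma>: "\<sigma>^2 = 1" and m: "m \<in> {1..<t}" for P k \<sigma> m
  proof
    show "BM P \<mu> k \<sigma> t m \<in> sets M" by (rule BM_sets[OF k])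
    have m1: "m \<ge> 1" using m by simp
    show "measure M (BM P \<mu> k \<sigma> t m) \<le> 1 / (real t)^3"
      unfolding BM_def by (rule bad_mean[where \<mu>=\<mu> and k=k and P=P and t=t and \<sigma>=\<sigma> and m=m, OF subgauss[OF k] k \<sigma> m1 t1])
  qed
  have BPb: "BP \<mu> \<Sigma> i j \<sigma> t m \<in> sets M \<and> measure M (BP \<mu> \<Sigma> i j \<sigma> t m) \<le> 1 / (real t)^3"
    if \<sigma>: "\<bar>\<sigma>\<bar> = 1" and m: "m \<in> {1..<t}" for \<sigma> m
  proof
    show "BP \<mu> \<Sigma> i j \<sigma> t m \<in> sets M" by (rule BP_sets[OF ij])
    have m1: "m \<ge> 1" using m by simp
    show "measure M (BP \<mu> \<Sigma> i j \<sigma> t m) \<le> 1 / (real t)^3"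
      unfolding BP_def using bad_prod[OF subgauss Sigma_def ij \<sigma> m1 t1, of "\<lambda>S. i \<in> S \<and> j \<in> S"] by simp
  qed
  define Bs where "Bs = [U (BM (\<lambda>S. i \<in> S) \<mu> i 1 t), U (BM (\<lambda>S. i \<in> S) \<mu> i (-1) t),
       U (BM (\<lambda>S. j \<in> S) \<mu> j 1 t), U (BM (\<lambda>S. j \<in> S) \<mu> j (-1) t),
       U (BM (\<lambda>S. i \<in> S \<and> j \<in> S) \<mu> i 1 t), U (BM (\<lambda>S. i \<in> S \<and> j \<in> S) \<mu> i (-1) t),
       U (BM (\<lambda>S. i \<in> S \<and> j \<in> S) \<mu> j 1 t), U (BM (\<lambda>S. i \<in> S \<and> j \<in> S) \<mu> j (-1) t),
       U (BP \<mu> \<Sigma> i j 1 t), U (BP \<mu> \<Sigma> i j (-1) t)]"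
  have Bs_prop: "\<forall>B\<in>set Bs. B \<in> sets M \<and> measure M B \<le> (real t - 1) / (real t)^3"
  proof -
    have U1: "U (BM P \<mu> k \<sigma> t) \<in> sets M \<and> measure M (U (BM P \<mu> k \<sigma> t)) \<le> (real t - 1) / (real t)^3"
      if "k < n" "\<sigma>^2 = 1" for P k \<sigma> by (rule Ub) (rule BMb[OF that])
    have U2: "U (BP \<mu> \<Sigma> i j \<sigma> t) \<in> sets M \<and> measure M (U (BP \<mu> \<Sigma> i j \<sigma> t)) \<le> (real t - 1) / (real t)^3"
      if "\<bar>\<sigma>\<bar> = 1" for \<sigma> by (rule Ub) (rule BPb[OF that])
    show ?thesis unfolding Bs_def using ij by (simp add: U1 U2)
  qed
  define Bad where "Bad = \<Union>(set Bs)"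
  have Bad_sets: "Bad \<in> sets M" unfolding Bad_def using Bs_prop by (intro sets.finite_Union) auto
  have "measure M Bad \<le> sum_list (map (measure M) Bs)"
    unfolding Bad_def using Bs_prop by (intro measure_Union_list) auto
  also have "\<dots> \<le> real (length Bs) * ((real t - 1) / (real t)^3)"
    using Bs_prop by (intro sum_list_bound) auto
  also have "\<dots> = 10 * ((real t - 1) / (real t)^3)" by (simp add: Bs_def)
  also have "\<dots> \<le> 10 * (real t / (real t)^3)" using tpos by (intro mult_left_mono divide_right_mono) auto
  also have "real t / (real t)^3 = 1 / (real t)^2" using tpos by (simp add: power2_eq_square power3_eq_cube)
  finally have pBad: "measure M Bad \<le> 10 / (real t)^2" by simp
  define G where "G = space M - Bad"
  have pG: "measure M G \<ge> 1 - 10 / (real t)^2"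
    unfolding G_def using prob_compl[OF Bad_sets] pBad by simp
  have coreG: "\<bar>\<Sigma> i j - emp_cov A X t i j w\<bar> \<le> gwidth A t i j w"
    if w: "w \<in> G" and N1: "Npair A t i j w \<ge> 1" for w
  proof (rule core[OF ij _ N1 _ t])
    show "w \<in> space M" using w by (simp add: G_def)
    fix m assume m: "m \<in> {1..<t}"
    have "w \<notin> Bad" using w by (simp add: G_def)
    thus "w \<notin> BM (\<lambda>S. i \<in> S) \<mu> i 1 t m \<and> w \<notin> BM (\<lambda>S. i \<in> S) \<mu> i (-1) t m \<and>
       w \<notin> BM (\<lambda>S. j \<in> S) \<mu> j 1 t m \<and> w \<notin> BM (\<lambda>S. j \<in> S) \<mu> j (-1) t m \<and>
       w \<notin> BM (\<lambda>S. i \<in> S \<and> j \<in> S) \<mu> i 1 t m \<and> w \<notin> BM (\<lambda>S. i \<in> S \<and> j \<in> S) \<mu> i (-1) t m \<and>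
       w \<notin> BM (\<lambda>S. i \<in> S \<and> j \<in> S) \<mu> j 1 t m \<and> w \<notin> BM (\<lambda>S. i \<in> S \<and> j \<in> S) \<mu> j (-1) t m \<and>
       w \<notin> BP \<mu> \<Sigma> i j 1 t m \<and> w \<notin> BP \<mu> \<Sigma> i j (-1) t m"
      using m unfolding Bad_def Bs_def U_def by auto
  qed
  define T1 where "T1 = {w \<in> space M. Npair A t i j w \<ge> 1 \<longrightarrow>
             \<bar>\<Sigma> i j - emp_cov A X t i j w\<bar> \<le> gwidth A t i j w}"
  define T2 where "T2 = {w \<in> space M. Npair A t i j w \<ge> 1 \<longrightarrow>
             (let \<Sigma>t = emp_cov A X t i j w + gwidth A t i j w in
               0 \<le> \<Sigma>t - \<Sigma> i j \<and> \<Sigma>t - \<Sigma> i j \<le> 2 * gwidth A t i j w)}"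
  have T1s: "T1 \<in> sets M"
  proof -
    have "T1 = {w \<in> space M. 1 \<le> real (Npair A t i j w) \<longrightarrow>
             \<bar>\<Sigma> i j - emp_cov A X t i j w\<bar> \<le> gwidth A t i j w}" unfolding T1_def by simp
    also have "\<dots> \<in> sets M" by measurable
    finally show ?thesis .
  qed
  have T2s: "T2 \<in> sets M"
  proof -
    have "T2 = {w \<in> space M. 1 \<le> real (Npair A t i j w) \<longrightarrow>
               0 \<le> emp_cov A X t i j w + gwidth A t i j w - \<Sigma> i j \<and>
               emp_cov A X t i j w + gwidth A t i j w - \<Sigma> i j \<le> 2 * gwidth A t i j w}"
      unfolding T2_def Let_def by simp
    also have "\<dots> \<in> sets M" by measurable
    finally show ?thesis .
  qed
  have GT1: "G \<subseteq> T1"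
  proof
    fix w assume w: "w \<in> G"
    thus "w \<in> T1" using coreG[OF w] unfolding T1_def G_def by auto
  qed
  have GT2: "G \<subseteq> T2"
  proof
    fix w assume w: "w \<in> G"
    have "w \<in> space M" using w by (simp add: G_def)
    moreover have "0 \<le> emp_cov A X t i j w + gwidth A t i j w - \<Sigma> i j \<and>
        emp_cov A X t i j w + gwidth A t i j w - \<Sigma> i j \<le> 2 * gwidth A t i j w"
      if "Npair A t i j w \<ge> 1" using coreG[OF w that] by (simp add: abs_le_iff)
    ultimately show "w \<in> T2" unfolding T2_def Let_def by auto
  qed
  have "measure M T1 \<ge> 1 - 10 / (real t)^2"
    using pG finite_measure_mono[OF GT1 T1s] by linarith
  moreover have "measure M T2 \<ge> 1 - 10 / (real t)^2"
    using pG finite_measure_mono[OF GT2 T2s] by linarith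
  ultimately show ?thesis unfolding T1_def T2_def by simp
qed

end

theorem proposition2:
  fixes M :: "'a measure" and MR :: "'r measure" and R :: "'a \<Rightarrow> 'r"
    and n :: nat and \<A> :: "nat set set"
    and X :: "nat \<Rightarrow> 'a \<Rightarrow> nat \<Rightarrow> real"
    and A :: "nat \<Rightarrow> 'a \<Rightarrow> nat set"
    and \<mu> :: "nat \<Rightarrow> real" and \<Sigma> :: "nat \<Rightarrow> nat \<Rightarrow> real"
    and t i j :: nat
  assumes M: "prob_space M"
    and actions: "\<forall>S\<in>\<A>. S \<noteq> {} \<and> S \<subseteq> {..<n}"
    and X_meas: "\<And>u k. (\<lambda>w. X u w k) \<in> borel_measurable M"
    and X_indep: "prob_space.indep_vars M (\<lambda>_. PiM {..<n} (\<lambda>_. borel))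
                    (\<lambda>u w. restrict (X u w) {..<n}) UNIV"
    and X_ident: "\<And>u. distr M (PiM {..<n} (\<lambda>_. borel)) (\<lambda>w. restrict (X u w) {..<n})
                       = distr M (PiM {..<n} (\<lambda>_. borel)) (\<lambda>w. restrict (X 0 w) {..<n})"
    and R_meas: "R \<in> measurable M MR"
    and R_indep: "prob_space.indep_set M
                    {R -` B \<inter> space M | B. B \<in> sets MR}
                    {(\<lambda>w u. restrict (X u w) {..<n}) -` C \<inter> space M | C.
                       C \<in> sets (PiM UNIV (\<lambda>_. PiM {..<n} (\<lambda>_. borel)))}"
    and A_in: "\<And>u w. w \<in> space M \<Longrightarrow> A u w \<in> \<A>"
    and A_adapted: "\<And>u S. {w \<in> space M. A u w = S} \<in> hist_events M MR R A X u"
    and mu_def: "\<And>k. \<mu> k = integral\<^sup>L M (\<lambda>w. X 0 w k)"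
    and Sigma_def: "\<And>k l. \<Sigma> k l = integral\<^sup>L M (\<lambda>w. (X 0 w k - \<mu> k) * (X 0 w l - \<mu> l))"
    and subgauss: "\<And>k s. k < n \<Longrightarrow>
                     integrable M (\<lambda>w. exp (s * (X 0 w k - \<mu> k))) \<and>
                     integral\<^sup>L M (\<lambda>w. exp (s * (X 0 w k - \<mu> k))) \<le> exp (s\<^sup>2 / 2)"
    and t: "t \<ge> 2"
    and ij: "i < n" "j < n"
  shows "measure M {w \<in> space M. Npair A t i j w \<ge> 1 \<longrightarrow>
             \<bar>\<Sigma> i j - emp_cov A X t i j w\<bar> \<le> gwidth A t i j w}
           \<ge> 1 - 10 / (real t)\<^sup>2
       \<and> measure M {w \<in> space M. Npair A t i j w \<ge> 1 \<longrightarrow>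
             (let \<Sigma>t = emp_cov A X t i j w + gwidth A t i j w in
               0 \<le> \<Sigma>t - \<Sigma> i j \<and> \<Sigma>t - \<Sigma> i j \<le> 2 * gwidth A t i j w)}
           \<ge> 1 - 10 / (real t)\<^sup>2"
  proof -
  interpret bandit M MR R n \<A> X A
    by (rule bandit.intro) (fact M actions X_meas X_indep X_ident R_meas R_indep A_in A_adapted)+
  show ?thesis by (rule final[OF Sigma_def subgauss t ij])
qed

end
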